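(* Let $\mathscr Q_n$ be a non-singular quadric in $\mathrm{PG}(n,q)$ of projective index $g$ with point-graph $\Gamma$, let $0\le s<g$, let $\alpha_s$ be an $s$-dimensional subspace contained in $\mathscr Q_n$, and let $\Gamma^*$ be the subgraph of $\Gamma$ induced on the set $\mathcal X_s$ of type (ii) points. Then $\Gamma^*$ is regular of degree $k$, where: (1) if $\mathscr Q_n=\mathcal E_{2r+1}$, $k=(q^{s+1}-1)+\dfrac{q^{s+2}(q^{r-s-1}+1)(q^{r-s-2}-1)}{q-1}$; (2) if $\mathscr Q_n=\mathcal H_{2r+1}$, $k=(q^{s+1}-1)+\dfrac{q^{s+2}(q^{r-s-2}+1)(q^{r-s-1}-1)}{q-1}$; (3) if $\mathscr Q_n=\mathcal P_{2r}$, $k=(q^{s+1}-1)+\dfrac{q^{s+2}(q^{r-s-2}+1)(q^{r-s-2}-1)}{q-1}$.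
   Context: A non-singular quadric $\mathscr Q_n$ in $\mathrm{PG}(n,q)$ is the point set of a non-degenerate quadric; its projective index $g$ is the largest dimension of a projective subspace contained in $\mathscr Q_n$. If $n=2r$, $\mathscr Q_n$ is the parabolic quadric $\mathcal P_{2r}$ ($g=r-1$); if $n=2r+1$, it is the elliptic quadric $\mathcal E_{2r+1}$ ($g=r-1$) or the hyperbolic quadric $\mathcal H_{2r+1}$ ($g=r$). The point-graph $\Gamma$ has vertex set the points of $\mathscr Q_n$, two distinct points adjacent iff the line joining them is contained in $\mathscr Q_n$. A point $X$ of $\mathscr Q_n$ is of type (ii) with respect to $\alpha_s$ if $X\notin\alpha_s$ and the $(s+1)$-space $\langle\alpha_s,X\rangle$ is contained in $\mathscr Q_n$. *)

theory Defs
  imports Complex_Main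
begin

text \<open>Vectors of V(n+1,q) are functions nat => 'a vanishing outside {0..n};
  'a is a finite field GF(q).\<close>

definition vecs :: "nat \<Rightarrow> (nat \<Rightarrow> 'a::field) set" where
  "vecs n = {x. \<forall>i>n. x i = 0}"

definition pt :: "(nat \<Rightarrow> 'a::field) \<Rightarrow> (nat \<Rightarrow> 'a) set" where
  "pt v = {(\<lambda>i. c * v i) | c. c \<noteq> 0}"

definition points :: "nat \<Rightarrow> (nat \<Rightarrow> 'a::field) set set" where
  "points n = {pt v | v. v \<in> vecs n \<and> v \<noteq> (\<lambda>i. 0)}"

definition indep :: "(nat \<Rightarrow> nat \<Rightarrow> 'a::field) \<Rightarrow> nat \<Rightarrow> bool" where
  "indep b k = (\<forall>c. (\<lambda>i. \<Sum>j<k. c j * b j i) = (\<lambda>i. 0) \<longrightarrow> (\<forall>j<k. c j = 0))"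

definition vspan :: "(nat \<Rightarrow> 'a::field) set \<Rightarrow> (nat \<Rightarrow> 'a) set" where
  "vspan A = {(\<lambda>i. \<Sum>a\<in>F. c a * a i) | F c. finite F \<and> F \<subseteq> A}"

definition join :: "(nat \<Rightarrow> 'a::field) set set \<Rightarrow> (nat \<Rightarrow> 'a) set set" where
  "join S = {pt v | v. v \<in> vspan (\<Union>S) \<and> v \<noteq> (\<lambda>i. 0)}"

definition is_subspace :: "nat \<Rightarrow> nat \<Rightarrow> (nat \<Rightarrow> 'a::field) set set \<Rightarrow> bool" where
  "is_subspace n d S = (\<exists>b. (\<forall>j<d+1. b j \<in> vecs n) \<and> indep b (d+1) \<and>
      S = {pt v | v. v \<in> vspan (b ` {..<d+1}) \<and> v \<noteq> (\<lambda>i. 0)})"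

definition lin_map :: "nat \<Rightarrow> (nat \<Rightarrow> nat \<Rightarrow> 'a::field) \<Rightarrow> (nat \<Rightarrow> 'a) \<Rightarrow> (nat \<Rightarrow> 'a)" where
  "lin_map n M x = (\<lambda>i. if i \<le> n then (\<Sum>j\<le>n. M i j * x j) else 0)"

definition hyp_form :: "nat \<Rightarrow> (nat \<Rightarrow> 'a::field) \<Rightarrow> 'a" where
  "hyp_form r x = (\<Sum>i<r+1. x (2*i) * x (2*i+1))"

definition par_form :: "nat \<Rightarrow> (nat \<Rightarrow> 'a::field) \<Rightarrow> 'a" where
  "par_form r x = x 0 ^ 2 + (\<Sum>i<r. x (2*i+1) * x (2*i+2))"

definition ell_form :: "nat \<Rightarrow> 'a \<Rightarrow> 'a \<Rightarrow> (nat \<Rightarrow> 'a::field) \<Rightarrow> 'a" where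
  "ell_form r d e x = (\<Sum>i<r. x (2*i) * x (2*i+1))
      + (x (2*r) ^ 2 + d * x (2*r) * x (2*r+1) + e * x (2*r+1) ^ 2)"

datatype qtype = Elliptic | Hyperbolic | Parabolic

definition zero_set :: "nat \<Rightarrow> ((nat \<Rightarrow> 'a::field) \<Rightarrow> 'a) \<Rightarrow> (nat \<Rightarrow> 'a) set set" where
  "zero_set n Q = {pt v | v. v \<in> vecs n \<and> v \<noteq> (\<lambda>i. 0) \<and> Q v = 0}"

definition is_quadric :: "qtype \<Rightarrow> nat \<Rightarrow> nat \<Rightarrow> (nat \<Rightarrow> 'a::field) set set \<Rightarrow> bool" where
  "is_quadric T n r QS = (\<exists>M. bij_betw (lin_map n M) (vecs n) (vecs n) \<and>
     (case T of
        Elliptic \<Rightarrow> n = 2*r+1 \<and> (\<exists>d e. (\<forall>t::'a. t^2 + d*t + e \<noteq> 0) \<and>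
                        QS = zero_set n (\<lambda>v. ell_form r d e (lin_map n M v)))
      | Hyperbolic \<Rightarrow> n = 2*r+1 \<and> QS = zero_set n (\<lambda>v. hyp_form r (lin_map n M v))
      | Parabolic \<Rightarrow> n = 2*r \<and> r \<ge> 1 \<and> QS = zero_set n (\<lambda>v. par_form r (lin_map n M v))))"

definition proj_index :: "nat \<Rightarrow> (nat \<Rightarrow> 'a::field) set set \<Rightarrow> int" where
  "proj_index n QS = (GREATEST d::int. d = -1 \<or>
      (d \<ge> 0 \<and> (\<exists>S. is_subspace n (nat d) S \<and> S \<subseteq> QS)))"

definition adj :: "(nat \<Rightarrow> 'a::field) set set \<Rightarrow> (nat \<Rightarrow> 'a) set \<Rightarrow> (nat \<Rightarrow> 'a) set \<Rightarrow> bool" where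
  "adj QS X Y = (X \<in> QS \<and> Y \<in> QS \<and> X \<noteq> Y \<and> join {X, Y} \<subseteq> QS)"

definition type2 :: "nat \<Rightarrow> (nat \<Rightarrow> 'a::field) set set \<Rightarrow> (nat \<Rightarrow> 'a) set set \<Rightarrow> (nat \<Rightarrow> 'a) set set" where
  "type2 n QS alpha = {X \<in> points n. X \<notin> alpha \<and> join (insert X alpha) \<subseteq> QS}"

definition deg :: "qtype \<Rightarrow> real \<Rightarrow> nat \<Rightarrow> nat \<Rightarrow> real" where
  "deg T q r s = (let e = int r - int s;
      (a, b) = (case T of Elliptic \<Rightarrow> (e - 1, e - 2)
                         | Hyperbolic \<Rightarrow> (e - 2, e - 1)
                         | Parabolic \<Rightarrow> (e - 2, e - 2))
     in (q^(s+1) - 1) + q^(s+2) * (q powi a + 1) * (q powi b - 1) / (q - 1))"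

end

theory Submission
  imports Defs "HOL-Library.Function_Algebras" "HOL-Library.FuncSet"
begin


definition sc :: "'a::field \<Rightarrow> (nat \<Rightarrow> 'a) \<Rightarrow> (nat \<Rightarrow> 'a)" where
  "sc c x = (\<lambda>i. c * x i)"

definition subsp :: "(nat \<Rightarrow> 'a::field) set \<Rightarrow> bool" where
  "subsp U \<longleftrightarrow> 0 \<in> U \<and> (\<forall>x\<in>U. \<forall>y\<in>U. x + y \<in> U) \<and> (\<forall>c. \<forall>x\<in>U. sc c x \<in> U)"

definition bl :: "((nat \<Rightarrow> 'a::field) \<Rightarrow> 'a) \<Rightarrow> (nat \<Rightarrow> 'a) \<Rightarrow> (nat \<Rightarrow> 'a) \<Rightarrow> 'a" where
  "bl Q x y = Q (x + y) - Q x - Q y"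

definition qf :: "((nat \<Rightarrow> 'a::field) \<Rightarrow> 'a) \<Rightarrow> bool" where
  "qf Q \<longleftrightarrow> (\<forall>c x. Q (sc c x) = c^2 * Q x) \<and> (\<forall>x y z. bl Q (x + y) z = bl Q x z + bl Q y z)
     \<and> (\<forall>c x y. bl Q (sc c x) y = c * bl Q x y)"

definition okq :: "((nat \<Rightarrow> 'a::field) \<Rightarrow> 'a) \<Rightarrow> (nat \<Rightarrow> 'a) set \<Rightarrow> bool" where
  "okq Q U \<longleftrightarrow> (\<forall>c\<in>U. c \<noteq> 0 \<and> Q c = 0 \<longrightarrow> (\<exists>d\<in>U. bl Q c d \<noteq> 0))"

definition perp :: "((nat \<Rightarrow> 'a::field) \<Rightarrow> 'a) \<Rightarrow> (nat \<Rightarrow> 'a) set \<Rightarrow> (nat \<Rightarrow> 'a) set" where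
  "perp Q C = {v. \<forall>x\<in>C. bl Q v x = 0}"

definition Zc :: "((nat \<Rightarrow> 'a::field) \<Rightarrow> 'a) \<Rightarrow> (nat \<Rightarrow> 'a) set \<Rightarrow> nat" where
  "Zc Q S = card {v\<in>S. Q v = 0}"

lemma sc_add: "sc c (x + y) = sc c x + sc c y" by (auto simp: sc_def fun_eq_iff algebra_simps)
lemma sc_add2: "sc (a + b) x = sc a x + sc b x" by (auto simp: sc_def fun_eq_iff algebra_simps)
lemma sc_sc: "sc a (sc b x) = sc (a*b) x" by (auto simp: sc_def fun_eq_iff algebra_simps)
lemma sc_1[simp]: "sc 1 x = x" by (auto simp: sc_def)
lemma sc_0[simp]: "sc 0 x = 0" by (auto simp: sc_def fun_eq_iff)
lemma sc_z[simp]: "sc c 0 = 0" by (auto simp: sc_def fun_eq_iff)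
lemma sc_minus: "x - y = x + sc (-1) y" by (auto simp: sc_def fun_eq_iff)
lemma sc_eq0: "sc c x = 0 \<longleftrightarrow> c = 0 \<or> x = 0" by (auto simp: sc_def fun_eq_iff)
lemma sc_cancel: "c \<noteq> 0 \<Longrightarrow> sc c x = sc c y \<longleftrightarrow> x = y" by (auto simp: sc_def fun_eq_iff)
lemma sc_inv: "c \<noteq> 0 \<Longrightarrow> sc (inverse c) (sc c x) = x" by (simp add: sc_sc)

lemma subspD:
  assumes "subsp U"
  shows "0 \<in> U" "x \<in> U \<Longrightarrow> y \<in> U \<Longrightarrow> x + y \<in> U" "x \<in> U \<Longrightarrow> sc c x \<in> U"
    "x \<in> U \<Longrightarrow> y \<in> U \<Longrightarrow> x - y \<in> U"
  using assms by (auto simp: subsp_def sc_minus)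

context
  fixes Q :: "(nat \<Rightarrow> 'a::field) \<Rightarrow> 'a"
  assumes qf: "qf Q"
begin

lemma Q_sc: "Q (sc c x) = c^2 * Q x" using qf by (simp add: qf_def)
lemma Q0[simp]: "Q 0 = 0" using Q_sc[of 0] by simp
lemma bl_sym: "bl Q x y = bl Q y x" by (simp add: bl_def add.commute)
lemma bl_add1: "bl Q (x + y) z = bl Q x z + bl Q y z" using qf by (simp add: qf_def)
lemma bl_add2: "bl Q z (x + y) = bl Q z x + bl Q z y" using bl_add1 bl_sym by metis
lemma bl_sc1: "bl Q (sc c x) y = c * bl Q x y" using qf by (simp add: qf_def)
lemma bl_sc2: "bl Q y (sc c x) = c * bl Q y x" using bl_sc1 bl_sym by metis
lemma bl_01[simp]: "bl Q 0 y = 0" using bl_sc1[of 0] by simp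
lemma bl_02[simp]: "bl Q y 0 = 0" using bl_sc2[of _ 0] by simp
lemma bl_diff1: "bl Q (x - y) z = bl Q x z - bl Q y z" by (simp add: sc_minus bl_add1 bl_sc1)
lemma bl_diff2: "bl Q z (x - y) = bl Q z x - bl Q z y" by (simp add: sc_minus bl_add2 bl_sc2)
lemma Q_add: "Q (x + y) = Q x + Q y + bl Q x y" by (simp add: bl_def)
lemma bl_self: "bl Q x x = 2 * Q x"
proof -
  have "x + x = sc 2 x" by (auto simp: sc_def fun_eq_iff)
  then have "Q (x + x) = 4 * Q x" using Q_sc[of 2 x] by simp
  then show ?thesis by (simp add: bl_def)
qed

lemma ts_bl: "subsp C \<Longrightarrow> \<forall>x\<in>C. Q x = 0 \<Longrightarrow> x \<in> C \<Longrightarrow> y \<in> C \<Longrightarrow> bl Q x y = 0"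
  unfolding bl_def by (simp add: subspD)

end


lemma card_prod0: "card {p::'a::{finite,field}\<times>'a. fst p * snd p = 0} = 2 * card (UNIV::'a set) - 1"
proof -
  define A :: "('a\<times>'a) set" where "A = {0} \<times> UNIV"
  define B :: "('a\<times>'a) set" where "B = UNIV \<times> {0}"
  have e: "{p::'a\<times>'a. fst p * snd p = 0} = A \<union> B" by (auto simp: A_def B_def)
  have "card A + card B = card (A \<union> B) + card (A \<inter> B)"
    by (rule card_Un_Int) auto
  moreover have "A \<inter> B = {(0,0)}" by (auto simp: A_def B_def)
  moreover have "card A = card (UNIV::'a set)" by (simp add: card_cartesian_product A_def)
  moreover have "card B = card (UNIV::'a set)" by (simp add: card_cartesian_product B_def)
  ultimately show ?thesis using e by simp
qed

lemma card_prodt: "t \<noteq> 0 \<Longrightarrow> card {p::'a::{finite,field}\<times>'a. fst p * snd p = t} = card (UNIV::'a set) - 1"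
proof -
  assume t: "t \<noteq> 0"
  have "{p::'a\<times>'a. fst p * snd p = t} = (\<lambda>a. (a, t / a)) ` (UNIV - {0})"
  proof (rule set_eqI, rule iffI)
    fix p :: "'a \<times> 'a" assume "p \<in> {p. fst p * snd p = t}"
    then have "fst p \<noteq> 0" "snd p = t / fst p" using t by (auto simp: field_simps)
    then show "p \<in> (\<lambda>a. (a, t / a)) ` (UNIV - {0})" by (intro image_eqI[of _ _ "fst p"]) (auto simp: prod_eq_iff)
  qed (use t in \<open>auto split: if_splits\<close>)
  moreover have "inj_on (\<lambda>a. (a, t / a)) (UNIV - {0::'a})" by (auto simp: inj_on_def)
  ultimately show ?thesis by (simp add: card_image card_Diff_singleton)
qed

lemma card_ge2: "card (UNIV::'a::{finite,field} set) \<ge> 2"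
proof -
  have "{0::'a, 1} \<subseteq> UNIV" by auto
  then have "card {0::'a, 1} \<le> card (UNIV::'a set)" by (rule card_mono[OF finite])
  then show ?thesis by simp
qed

context
  fixes Q :: "(nat \<Rightarrow> 'a::{finite,field}) \<Rightarrow> 'a" and U :: "(nat \<Rightarrow> 'a) set" and c d :: "nat \<Rightarrow> 'a"
  assumes qf: "qf Q" and U: "subsp U" and cU: "c \<in> U" and dU: "d \<in> U"
    and Qc: "Q c = 0" and Qd: "Q d = 0" and cd: "bl Q c d = 1"
begin

definition "W = {w\<in>U. bl Q w c = 0 \<and> bl Q w d = 0}"
definition "ff = (\<lambda>(a,b,w). sc a c + sc b d + w)"

lemma dc: "bl Q d c = 1" using cd bl_sym[OF qf] by metis
lemma cc: "bl Q c c = 0" using bl_self[OF qf] Qc by simp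
lemma dd: "bl Q d d = 0" using bl_self[OF qf] Qd by simp

lemma W_sub: "W \<subseteq> U" by (auto simp: W_def)

lemma W_subsp: "subsp W"
  using U unfolding subsp_def W_def by (auto simp: bl_add1[OF qf] bl_sc1[OF qf] bl_01[OF qf])

lemma ff_d: "w \<in> W \<Longrightarrow> bl Q (sc a c + sc b d + w) d = a"
  by (simp add: W_def bl_add1[OF qf] bl_sc1[OF qf] cd dd)
lemma ff_c: "w \<in> W \<Longrightarrow> bl Q (sc a c + sc b d + w) c = b"
  by (simp add: W_def bl_add1[OF qf] bl_sc1[OF qf] cc dc)

lemma ff_Q: "w \<in> W \<Longrightarrow> Q (sc a c + sc b d + w) = a * b + Q w"
  using qf by (simp add: W_def Q_add bl_add1 bl_sc1 bl_sc2 Q_sc Qc Qd cd bl_sym[of Q w])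

lemma decomp: "v \<in> U \<Longrightarrow> v - sc (bl Q v d) c - sc (bl Q v c) d \<in> W
   \<and> v = sc (bl Q v d) c + sc (bl Q v c) d + (v - sc (bl Q v d) c - sc (bl Q v c) d)"
  using qf U cU dU by (auto simp: W_def bl_diff1 bl_sc1 cc dc cd dd subspD)

lemma ff_inj: "inj_on ff (UNIV \<times> UNIV \<times> W)"
proof (rule inj_onI)
  fix x y assume x: "x \<in> UNIV \<times> UNIV \<times> W" and y: "y \<in> UNIV \<times> UNIV \<times> W" and e: "ff x = ff y"
  obtain a b w where xx: "x = (a,b,w)" "w \<in> W" using x by auto
  obtain a' b' w' where yy: "y = (a',b',w')" "w' \<in> W" using y by auto
  have e': "sc a c + sc b d + w = sc a' c + sc b' d + w'" using e by (simp add: ff_def xx yy)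
  have "a = a'" using ff_d[OF xx(2), of a b] ff_d[OF yy(2), of a' b'] e' by simp
  moreover have "b = b'" using ff_c[OF xx(2), of a b] ff_c[OF yy(2), of a' b'] e' by simp
  ultimately show "x = y" using e' xx yy by simp
qed

lemma ff_img: "ff ` (UNIV \<times> UNIV \<times> W) = U"
proof
  show "ff ` (UNIV \<times> UNIV \<times> W) \<subseteq> U" using U W_sub cU dU by (auto simp: ff_def subspD)
  show "U \<subseteq> ff ` (UNIV \<times> UNIV \<times> W)"
  proof
    fix v assume v: "v \<in> U"
    show "v \<in> ff ` (UNIV \<times> UNIV \<times> W)"
      using decomp[OF v] by (intro image_eqI[of _ _ "(bl Q v d, bl Q v c, v - sc (bl Q v d) c - sc (bl Q v c) d)"]) (auto simp: ff_def)
  qed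
qed

lemma card_U: "card U = card (UNIV::'a set) * card (UNIV::'a set) * card W"
proof -
  have "card U = card ((UNIV::'a set) \<times> (UNIV::'a set) \<times> W)" using card_image[OF ff_inj] ff_img by simp
  then show ?thesis by (simp add: card_cartesian_product)
qed


lemma sum_card_eq: "finite W \<Longrightarrow> real (\<Sum>w\<in>W. card {p::'a\<times>'a. fst p * snd p = - Q w})
   = real (card (UNIV::'a set)) * real (card {w\<in>W. Q w = 0}) + (real (card (UNIV::'a set)) - 1) * real (card W)"
proof -
  assume fW: "finite W"
  let ?q = "real (card (UNIV::'a set))"
  have q2: "card (UNIV::'a set) \<ge> 2" by (rule card_ge2)
  have "real (\<Sum>w\<in>W. card {p::'a\<times>'a. fst p * snd p = - Q w})
     = (\<Sum>w\<in>W. (?q - 1) + (if Q w = 0 then ?q else 0))"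
    unfolding of_nat_sum
  proof (rule sum.cong[OF refl])
    fix w assume "w \<in> W"
    show "real (card {p::'a\<times>'a. fst p * snd p = - Q w}) = (?q - 1) + (if Q w = 0 then ?q else 0)"
    proof (cases "Q w = 0")
      case True then show ?thesis using card_prod0[where 'a='a] q2 by (simp add: of_nat_diff)
    next
      case False then show ?thesis using card_prodt[of "- Q w"] q2 by (simp add: of_nat_diff)
    qed
  qed
  also have "\<dots> = (?q - 1) * real (card W) + (\<Sum>w\<in>W. if Q w = 0 then ?q else 0)"
    by (simp add: sum.distrib)
  also have "(\<Sum>w\<in>W. if Q w = 0 then ?q else 0) = ?q * real (card {w\<in>W. Q w = 0})"
    using fW by (simp add: sum.If_cases Int_def conj_commute)
  finally show ?thesis by simp
qed

lemma Zc_U: "finite U \<Longrightarrow> real (Zc Q U) = real (card (UNIV::'a set)) * real (Zc Q W)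
   + (real (card (UNIV::'a set)) - 1) * real (card W)"
proof -
  assume fU: "finite U"
  have fW: "finite W" using W_sub fU finite_subset by blast
  define S where "S = (SIGMA w:W. {p::'a\<times>'a. fst p * snd p = - Q w})"
  define g where "g = (\<lambda>(w, p::'a\<times>'a). ff (fst p, snd p, w))"
  have inj: "inj_on g S"
  proof (rule inj_onI)
    fix x y assume x: "x \<in> S" and y: "y \<in> S" and e: "g x = g y"
    obtain w p where xx: "x = (w,p)" "w \<in> W" using x by (auto simp: S_def)
    obtain w' p' where yy: "y = (w',p')" "w' \<in> W" using y by (auto simp: S_def)
    have "(fst p, snd p, w) = (fst p', snd p', w')"
      using ff_inj e xx yy unfolding g_def inj_on_def by auto
    then show "x = y" using xx yy by (simp add: prod_eq_iff)
  qed
  have img: "g ` S = {v\<in>U. Q v = 0}"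
  proof
    show "g ` S \<subseteq> {v\<in>U. Q v = 0}"
    proof
      fix v assume "v \<in> g ` S"
      then obtain w p where wp: "w \<in> W" "fst p * snd p = - Q w" "v = g (w,p)" by (auto simp: S_def)
      then have "v \<in> U" using ff_img by (auto simp: g_def)
      moreover have "Q v = 0" using wp ff_Q[OF wp(1)] by (simp add: g_def ff_def)
      ultimately show "v \<in> {v\<in>U. Q v = 0}" by simp
    qed
    show "{v\<in>U. Q v = 0} \<subseteq> g ` S"
    proof
      fix v assume v: "v \<in> {v\<in>U. Q v = 0}"
      then obtain x where x: "x \<in> UNIV \<times> UNIV \<times> W" "v = ff x" using ff_img by blast
      then obtain a b w where abw: "x = (a,b,w)" "w \<in> W" by auto
      have "Q v = a * b + Q w" using ff_Q[OF abw(2)] x abw by (simp add: ff_def)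
      then have "a * b = - Q w" using v by (simp add: eq_neg_iff_add_eq_0 add.commute)
      then show "v \<in> g ` S" using abw x by (intro image_eqI[of _ _ "(w,(a,b))"]) (auto simp: g_def S_def)
    qed
  qed
  have "Zc Q U = card S" using card_image[OF inj] img by (simp add: Zc_def)
  also have "card S = (\<Sum>w\<in>W. card {p::'a\<times>'a. fst p * snd p = - Q w})"
    unfolding S_def using fW by (intro card_SigmaI) auto
  finally show ?thesis using sum_card_eq[OF fW] by (simp add: Zc_def)
qed

definition "Cp C = (\<lambda>x. x - sc (bl Q x d) c) ` C"

lemma hh_inj: "inj_on (\<lambda>(a,w). sc a c + w) (UNIV \<times> W)"
proof (rule inj_onI)
  fix x y assume x: "x \<in> UNIV \<times> W" and y: "y \<in> UNIV \<times> W"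
    and e: "(\<lambda>(a,w). sc a c + w) x = (\<lambda>(a,w). sc a c + w) y"
  obtain a w where xx: "x = (a,w)" "w \<in> W" using x by auto
  obtain a' w' where yy: "y = (a',w')" "w' \<in> W" using y by auto
  have "ff (a,0,w) = ff (a',0,w')" using e xx yy by (simp add: ff_def)
  then have "(a,0,w) = (a',0,w')" using ff_inj xx yy unfolding inj_on_def by blast
  then show "x = y" using xx yy by simp
qed

context
  fixes C assumes C: "subsp C" and CU: "C \<subseteq> U" and cC: "c \<in> C" and Cts: "\<forall>x\<in>C. Q x = 0"
begin

lemma C_bl: "x \<in> C \<Longrightarrow> y \<in> C \<Longrightarrow> bl Q x y = 0"
  using ts_bl[OF qf C Cts] by blast

lemma Cp_W: "Cp C \<subseteq> W"
proof
  fix w assume "w \<in> Cp C"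
  then obtain x where x: "x \<in> C" "w = x - sc (bl Q x d) c" by (auto simp: Cp_def)
  have "w \<in> U" using x CU cU U by (auto simp: subspD)
  moreover have "bl Q w c = 0" using x C_bl[OF x(1) cC] qf by (simp add: bl_diff1 bl_sc1 cc)
  moreover have "bl Q w d = 0" using x qf by (simp add: bl_diff1 bl_sc1 cd)
  ultimately show "w \<in> W" by (simp add: W_def)
qed

lemma Cp_ts: "\<forall>x\<in>Cp C. Q x = 0"
proof
  fix w assume "w \<in> Cp C"
  then obtain x where x: "x \<in> C" "w = x - sc (bl Q x d) c" by (auto simp: Cp_def)
  have "Q w = Q x + Q (sc (- bl Q x d) c) + bl Q x (sc (- bl Q x d) c)"
    using x by (simp add: sc_minus sc_sc Q_add[OF qf])
  then show "Q w = 0" using Cts x cC C_bl[OF x(1) cC] qf by (simp add: Q_sc bl_sc2 Qc)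
qed

lemma Cp_subsp: "subsp (Cp C)"
  unfolding subsp_def
proof (intro conjI ballI allI)
  show "0 \<in> Cp C" using C qf unfolding Cp_def by (intro image_eqI[of _ _ 0]) (auto simp: subspD)
next
  fix x y assume "x \<in> Cp C" "y \<in> Cp C"
  then obtain x' y' where xy: "x' \<in> C" "x = x' - sc (bl Q x' d) c" "y' \<in> C" "y = y' - sc (bl Q y' d) c"
    by (auto simp: Cp_def)
  have "x + y = (x' + y') - sc (bl Q (x' + y') d) c"
    using qf by (simp add: xy bl_add1 sc_add2 fun_eq_iff)
  then show "x + y \<in> Cp C" unfolding Cp_def by (intro image_eqI[where x="x'+y'"]) (use xy C in \<open>auto simp: subspD\<close>)
next
  fix a x assume "x \<in> Cp C"
  then obtain x' where xy: "x' \<in> C" "x = x' - sc (bl Q x' d) c" by (auto simp: Cp_def)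
  have "bl Q (sc a x') d = a * bl Q x' d" by (rule bl_sc1[OF qf])
  then have "sc a x = sc a x' - sc (bl Q (sc a x') d) c"
    by (simp add: xy sc_def fun_eq_iff algebra_simps)
  then show "sc a x \<in> Cp C" unfolding Cp_def by (intro image_eqI[where x="sc a x'"]) (use xy C in \<open>auto simp: subspD\<close>)
qed

lemma hh_C: "(\<lambda>(a,w). sc a c + w) ` (UNIV \<times> Cp C) = C"
proof
  show "(\<lambda>(a,w). sc a c + w) ` (UNIV \<times> Cp C) \<subseteq> C"
  proof
    fix v assume "v \<in> (\<lambda>(a,w). sc a c + w) ` (UNIV \<times> Cp C)"
    then obtain a x where "x \<in> C" "v = sc a c + (x - sc (bl Q x d) c)" by (auto simp: Cp_def)
    then show "v \<in> C" using C cC by (auto simp: subspD)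
  qed
  show "C \<subseteq> (\<lambda>(a,w). sc a c + w) ` (UNIV \<times> Cp C)"
  proof
    fix x assume x: "x \<in> C"
    have "x = sc (bl Q x d) c + (x - sc (bl Q x d) c)" by (simp add: fun_eq_iff)
    then show "x \<in> (\<lambda>(a,w). sc a c + w) ` (UNIV \<times> Cp C)"
      using x by (intro image_eqI[of _ _ "(bl Q x d, x - sc (bl Q x d) c)"]) (auto simp: Cp_def)
  qed
qed

lemma card_C: "card C = card (UNIV::'a set) * card (Cp C)"
proof -
  have "inj_on (\<lambda>(a,w). sc a c + w) (UNIV \<times> Cp C)"
    by (rule inj_on_subset[OF hh_inj]) (use Cp_W in auto)
  then have "card C = card ((UNIV::'a set) \<times> Cp C)" using hh_C card_image by fastforce
  then show ?thesis by (simp add: card_cartesian_product)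
qed

lemma perp_eq: "{v \<in> perp Q C \<inter> U. Q v = 0} = (\<lambda>(a,w). sc a c + w) ` (UNIV \<times> {w \<in> perp Q (Cp C) \<inter> W. Q w = 0})"
proof
  show "{v \<in> perp Q C \<inter> U. Q v = 0} \<subseteq> (\<lambda>(a,w). sc a c + w) ` (UNIV \<times> {w \<in> perp Q (Cp C) \<inter> W. Q w = 0})"
  proof
    fix v assume v: "v \<in> {v \<in> perp Q C \<inter> U. Q v = 0}"
    let ?w = "v - sc (bl Q v d) c - sc (bl Q v c) d"
    have vU: "v \<in> U" using v by simp
    have b0: "bl Q v c = 0" using v cC by (simp add: perp_def)
    have wW: "?w \<in> W" and ve: "v = sc (bl Q v d) c + sc (bl Q v c) d + ?w" using decomp[OF vU] by auto
    have Qw: "Q ?w = 0" using ff_Q[OF wW, of "bl Q v d" "bl Q v c"] ve v b0 by simp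
    have wc: "bl Q ?w c = 0" using wW by (simp add: W_def)
    have pw: "?w \<in> perp Q (Cp C)"
      unfolding perp_def
    proof (intro CollectI ballI)
      fix y assume "y \<in> Cp C"
      then obtain x where x: "x \<in> C" "y = x - sc (bl Q x d) c" by (auto simp: Cp_def)
      have "bl Q v x = 0" using v x by (simp add: perp_def)
      then show "bl Q ?w y = 0" using x b0 wc qf C_bl[OF cC x(1)]
        by (simp add: bl_diff1 bl_diff2 bl_sc1 bl_sc2 bl_sym[of Q d x] cc dc)
    qed
    show "v \<in> (\<lambda>(a,w). sc a c + w) ` (UNIV \<times> {w \<in> perp Q (Cp C) \<inter> W. Q w = 0})"
      using ve b0 wW Qw pw by (intro image_eqI[of _ _ "(bl Q v d, ?w)"]) auto
  qed
  show "(\<lambda>(a,w). sc a c + w) ` (UNIV \<times> {w \<in> perp Q (Cp C) \<inter> W. Q w = 0}) \<subseteq> {v \<in> perp Q C \<inter> U. Q v = 0}"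
  proof
    fix v assume "v \<in> (\<lambda>(a,w). sc a c + w) ` (UNIV \<times> {w \<in> perp Q (Cp C) \<inter> W. Q w = 0})"
    then obtain a w where aw: "v = sc a c + w" "w \<in> perp Q (Cp C)" "w \<in> W" "Q w = 0" by auto
    have "v \<in> U" using aw W_sub cU U by (auto simp: subspD)
    moreover have "Q v = 0" using ff_Q[OF aw(3), of a 0] aw by (simp add: sc_0)
    moreover have "v \<in> perp Q C"
      unfolding perp_def
    proof (intro CollectI ballI)
      fix x assume x: "x \<in> C"
      have "x - sc (bl Q x d) c \<in> Cp C" using x by (auto simp: Cp_def)
      then have "bl Q w (x - sc (bl Q x d) c) = 0" using aw by (simp add: perp_def)
      moreover have "bl Q w c = 0" using aw by (simp add: W_def)
      ultimately show "bl Q v x = 0" using aw qf C_bl[OF cC x]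
        by (simp add: bl_add1 bl_sc1 bl_diff2 bl_sc2)
    qed
    ultimately show "v \<in> {v \<in> perp Q C \<inter> U. Q v = 0}" by simp
  qed
qed

lemma Zc_perp: "Zc Q (perp Q C \<inter> U) = card (UNIV::'a set) * Zc Q (perp Q (Cp C) \<inter> W)"
proof -
  have "inj_on (\<lambda>(a,w). sc a c + w) (UNIV \<times> {w \<in> perp Q (Cp C) \<inter> W. Q w = 0})"
    using hh_inj by (rule inj_on_subset) auto
  then have "Zc Q (perp Q C \<inter> U) = card ((UNIV::'a set) \<times> {w \<in> perp Q (Cp C) \<inter> W. Q w = 0})"
    unfolding Zc_def perp_eq by (rule card_image)
  then show ?thesis by (simp add: card_cartesian_product Zc_def)
qed

end

lemma W_ok: "okq Q U \<Longrightarrow> okq Q W"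
  unfolding okq_def
proof (intro ballI impI)
  fix w assume ok: "\<forall>c\<in>U. c \<noteq> 0 \<and> Q c = 0 \<longrightarrow> (\<exists>d\<in>U. bl Q c d \<noteq> 0)"
    and wW: "w \<in> W" and w: "w \<noteq> 0 \<and> Q w = 0"
  then obtain v where v: "v \<in> U" "bl Q w v \<noteq> 0" using W_sub by blast
  let ?w = "v - sc (bl Q v d) c - sc (bl Q v c) d"
  have wW': "?w \<in> W" and ve: "v = sc (bl Q v d) c + sc (bl Q v c) d + ?w" using decomp[OF v(1)] by auto
  from ve have "bl Q w v = bl Q w (sc (bl Q v d) c + sc (bl Q v c) d + ?w)" by (rule arg_cong)
  also have "\<dots> = bl Q w ?w" by (simp only: bl_add2[OF qf] bl_sc2[OF qf]) (use wW in \<open>simp add: W_def\<close>)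
  finally have "bl Q w v = bl Q w ?w" .
  then show "\<exists>d\<in>W. bl Q w d \<noteq> 0" using wW' v by auto
qed

end


theorem main_count:
  fixes Q :: "(nat \<Rightarrow> 'a::{finite,field}) \<Rightarrow> 'a"
  assumes qf: "qf Q"
  shows "finite U \<Longrightarrow> subsp U \<Longrightarrow> okq Q U \<Longrightarrow> subsp C \<Longrightarrow> C \<subseteq> U \<Longrightarrow> \<forall>x\<in>C. Q x = 0 \<Longrightarrow>
    real (Zc Q (perp Q C \<inter> U)) = real (Zc Q U) - real (card U) / real (card (UNIV::'a set))
       + real (card U) / (real (card (UNIV::'a set)) * real (card C))"
proof (induction "card C" arbitrary: U C rule: less_induct)
  case less
  let ?q = "real (card (UNIV::'a set))"
  have q2: "card (UNIV::'a set) \<ge> 2" by (rule card_ge2)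
  show ?case
  proof (cases "C = {0}")
    case True
    have "perp Q C = UNIV" using True qf by (simp add: perp_def)
    then show ?thesis using True by simp
  next
    case False
    have C0: "0 \<in> C" using less.prems(4) by (simp add: subspD)
    then obtain c where cC: "c \<in> C" and c0: "c \<noteq> 0" using False by blast
    have cU: "c \<in> U" using cC less.prems(5) by blast
    have Qc: "Q c = 0" using cC less.prems(6) by blast
    obtain d0 where d0: "d0 \<in> U" "bl Q c d0 \<noteq> 0" using less.prems(3) cU c0 Qc unfolding okq_def by blast
    define d1 where "d1 = sc (inverse (bl Q c d0)) d0"
    define d where "d = d1 - sc (Q d1) c"
    have cd1: "bl Q c d1 = 1" using d0 qf by (simp add: d1_def bl_sc2)
    have cc: "bl Q c c = 0" using bl_self[OF qf] Qc by simp
    have dU: "d \<in> U" using less.prems(2) d0 cU by (simp add: d_def d1_def subspD)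
    have cd: "bl Q c d = 1" using qf cd1 cc by (simp add: d_def bl_diff2 bl_sc2)
    have "Q d = Q d1 + Q (sc (- Q d1) c) + bl Q d1 (sc (- Q d1) c)"
      by (simp add: d_def sc_minus sc_sc Q_add[OF qf])
    then have Qd: "Q d = 0" using qf Qc cd1 by (simp add: Q_sc bl_sc2 bl_sym[of Q d1 c])
    note ctx = qf less.prems(2) cU dU Qc Qd cd
    define W where "W = Submission.W Q U c d"
    define C' where "C' = Cp Q c d C"
    have fU: "finite U" by (rule less.prems(1))
    have fW: "finite W" using W_sub[OF ctx] fU unfolding W_def by (rule finite_subset)
    have fC: "finite C" using less.prems(5) fU by (rule finite_subset)
    have cardC: "card C = card (UNIV::'a set) * card C'"
      unfolding C'_def by (rule card_C[OF ctx less.prems(4,5) cC less.prems(6)])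
    have "card C > 0" using fC cC by (auto simp: card_gt_0_iff)
    then have lt: "card C' < card C" using cardC q2 by simp
    have IH: "real (Zc Q (perp Q C' \<inter> W)) = real (Zc Q W) - real (card W) / ?q
       + real (card W) / (?q * real (card C'))"
      apply (rule less.hyps[OF lt fW])
      subgoal unfolding W_def by (rule W_subsp[OF ctx])
      subgoal unfolding W_def by (rule W_ok[OF ctx less.prems(3)])
      subgoal unfolding C'_def by (rule Cp_subsp[OF ctx less.prems(4,5) cC less.prems(6)])
      subgoal unfolding C'_def W_def by (rule Cp_W[OF ctx less.prems(4,5) cC less.prems(6)])
      subgoal unfolding C'_def by (rule Cp_ts[OF ctx less.prems(4,5) cC less.prems(6)])
      done
    have Zp: "Zc Q (perp Q C \<inter> U) = card (UNIV::'a set) * Zc Q (perp Q C' \<inter> W)"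
      unfolding C'_def W_def by (rule Zc_perp[OF ctx less.prems(4,5) cC less.prems(6)])
    have ZU: "real (Zc Q U) = ?q * real (Zc Q W) + (?q - 1) * real (card W)"
      unfolding W_def by (rule Zc_U[OF ctx fU])
    have cU': "card U = card (UNIV::'a set) * card (UNIV::'a set) * card W"
      unfolding W_def by (rule card_U[OF ctx])
    have qp: "?q > 0" using q2 by simp
    have C'p: "real (card C') > 0" using lt cardC by (cases "card C' = 0") auto
    show ?thesis using IH qp C'p
      by (simp add: Zp ZU cU' cardC field_simps)
  qed
qed


definition supp :: "nat set \<Rightarrow> (nat \<Rightarrow> 'a::zero) set" where
  "supp K = {v. \<forall>i. i \<notin> K \<longrightarrow> v i = 0}"

lemma card_supp:
  assumes "finite K"
  shows "card (supp K :: (nat \<Rightarrow> 'a::{finite,field}) set) = card (UNIV::'a set) ^ card K"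
    and "finite (supp K :: (nat \<Rightarrow> 'a::{finite,field}) set)"
proof -
  have b: "bij_betw (\<lambda>v. restrict v K) (supp K :: (nat \<Rightarrow> 'a) set) (PiE K (\<lambda>_. UNIV))"
  proof (rule bij_betw_imageI)
    show "inj_on (\<lambda>v. restrict v K) (supp K :: (nat \<Rightarrow> 'a) set)"
      by (rule inj_onI) (auto simp: supp_def fun_eq_iff restrict_def split: if_splits, metis)
    show "(\<lambda>v. restrict v K) ` (supp K :: (nat \<Rightarrow> 'a) set) = PiE K (\<lambda>_. UNIV)"
    proof
      show "(\<lambda>v. restrict v K) ` (supp K :: (nat \<Rightarrow> 'a) set) \<subseteq> PiE K (\<lambda>_. UNIV)" by auto
      show "PiE K (\<lambda>_. UNIV) \<subseteq> (\<lambda>v. restrict v K) ` (supp K :: (nat \<Rightarrow> 'a) set)"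
      proof
        fix f :: "nat \<Rightarrow> 'a" assume f: "f \<in> PiE K (\<lambda>_. UNIV)"
        show "f \<in> (\<lambda>v. restrict v K) ` supp K"
          using f by (intro image_eqI[where x="\<lambda>i. if i \<in> K then f i else 0"])
             (auto simp: supp_def fun_eq_iff restrict_def PiE_def extensional_def)
      qed
    qed
  qed
  have "card (supp K :: (nat \<Rightarrow> 'a) set) = card (PiE K (\<lambda>_. UNIV :: 'a set))"
    using b by (rule bij_betw_same_card)
  then show "card (supp K :: (nat \<Rightarrow> 'a) set) = card (UNIV::'a set) ^ card K"
    using assms by (simp add: card_PiE)
  have "finite (PiE K (\<lambda>_. UNIV :: 'a set))" using assms by (simp add: finite_PiE)
  then show "finite (supp K :: (nat \<Rightarrow> 'a) set)" using bij_betw_finite[OF b] by simp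
qed

lemma supp_subsp: "subsp (supp K)"
  by (auto simp: subsp_def supp_def sc_def)

lemma vecs_supp: "vecs n = supp {..n}"
  by (auto simp: vecs_def supp_def)

definition ev :: "nat \<Rightarrow> nat \<Rightarrow> 'a::field" where "ev j = (\<lambda>i. if i = j then 1 else 0)"

lemma ev_supp: "j \<in> K \<Longrightarrow> ev j \<in> supp K" by (auto simp: supp_def ev_def)

definition hb :: "nat \<Rightarrow> (nat \<Rightarrow> 'a::field) \<Rightarrow> (nat \<Rightarrow> 'a) \<Rightarrow> 'a" where
  "hb r x y = (\<Sum>i<r+1. x (2*i) * y (2*i+1) + y (2*i) * x (2*i+1))"

lemma hyp_add: "hyp_form r (x + y) = hyp_form r x + hyp_form r y + hb r x y"
  by (simp add: hyp_form_def hb_def sum.distrib[symmetric] algebra_simps)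

lemma hyp_bl: "bl (hyp_form r) = hb r"
  by (auto simp: fun_eq_iff bl_def hyp_add)

lemma hyp_qf: "qf (hyp_form r)"
  by (simp add: qf_def hyp_bl hb_def hyp_form_def sc_def sum_distrib_left sum.distrib[symmetric]
      algebra_simps power2_eq_square)

lemma odd_neq[simp]: "Suc (2*i) \<noteq> 2*k" "2*k \<noteq> Suc (2*i)" "Suc (2*i) = Suc (2*k) \<longleftrightarrow> i = k"
  "2*i = 2*k \<longleftrightarrow> i = k" by presburger+

lemma mult_delta[simp]: "x * (if P then 1 else 0) = (if P then x else 0)"
   "(if P then 1 else 0) * x = (if P then x else 0)" for x :: "'a::field" by auto

lemma hb_ev0: "k \<le> r \<Longrightarrow> hb r v (ev (2*k)) = v (2*k+1)"
  by (simp add: hb_def ev_def sum.delta)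

lemma hb_ev1: "k \<le> r \<Longrightarrow> hb r v (ev (2*k+1)) = v (2*k)"
  by (simp add: hb_def ev_def sum.delta)


lemma Zc_from:
  fixes F :: "(nat \<Rightarrow> 'a::{finite,field}) \<Rightarrow> 'a"
  assumes "qf F" "okq F U" "finite U" "subsp U" "subsp C" "C \<subseteq> U" "\<forall>x\<in>C. F x = 0"
    and "{v \<in> perp F C \<inter> U. F v = 0} = C"
  shows "real (Zc F U) = real (card U) / real (card (UNIV::'a set)) + real (card C)
     - real (card U) / (real (card (UNIV::'a set)) * real (card C))"
  using main_count[OF assms(1,3,4,2,5,6,7)] assms(8) by (simp add: Zc_def)

lemma ts_perp:
  fixes F :: "(nat \<Rightarrow> 'a::field) \<Rightarrow> 'a"
  assumes "qf F" "subsp C" "C \<subseteq> U" "\<forall>x\<in>C. F x = 0"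
  shows "C \<subseteq> {v \<in> perp F C \<inter> U. F v = 0}"
  using ts_bl[OF assms(1,2,4)] assms(3,4) by (auto simp: perp_def)

lemma supp_mono: "K \<subseteq> L \<Longrightarrow> supp K \<subseteq> supp L" by (auto simp: supp_def)

lemma hyp_facts:
  fixes r :: nat
  defines "K \<equiv> (\<lambda>i. 2*i) ` {..r}"
  defines "C \<equiv> (supp K :: (nat \<Rightarrow> 'a::{finite,field}) set)"
  defines "U \<equiv> (vecs (2*r+1) :: (nat \<Rightarrow> 'a) set)"
  shows "C \<subseteq> U" "\<forall>x\<in>C. hyp_form r x = 0" "{v \<in> perp (hyp_form r) C \<inter> U. hyp_form r v = 0} = C"
    "okq (hyp_form r) U" "card K = r + 1"
proof -
  show CU: "C \<subseteq> U" unfolding C_def U_def vecs_supp K_def by (rule supp_mono) auto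
  show ts: "\<forall>x\<in>C. hyp_form r x = 0"
  proof
    fix x :: "nat \<Rightarrow> 'a" assume "x \<in> C"
    moreover have "\<forall>i. 2*i+1 \<notin> K" by (auto simp: K_def)
    ultimately have "\<forall>i. x (2*i+1) = 0" by (auto simp: C_def supp_def)
    then show "hyp_form r x = 0" by (simp add: hyp_form_def)
  qed
  have key: "v \<in> C" if v: "v \<in> U" "v \<in> perp (hyp_form r) C" for v
  proof -
    have o: "v (2*k+1) = 0" if "k \<le> r" for k
    proof -
      have "ev (2*k) \<in> C" unfolding C_def by (rule ev_supp) (use that in \<open>auto simp: K_def\<close>)
      then show ?thesis using v(2) hb_ev0[OF that, of v] by (auto simp: perp_def hyp_bl)
    qed
    show "v \<in> C" unfolding C_def supp_def
    proof (intro CollectI allI impI)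
      fix i assume i: "i \<notin> K"
      show "v i = 0"
      proof (cases "i \<le> 2*r+1")
        case False then show ?thesis using v(1) by (simp add: U_def vecs_def)
      next
        case True
        show ?thesis
        proof (cases "even i")
          case True then obtain k where "i = 2*k" by auto
          then show ?thesis using i \<open>i \<le> 2*r+1\<close> by (auto simp: K_def)
        next
          case False then obtain k where "i = 2*k+1" using oddE by blast
          then show ?thesis using o[of k] \<open>i \<le> 2*r+1\<close> by auto
        qed
      qed
    qed
  qed
  have "C \<subseteq> {v \<in> perp (hyp_form r) C \<inter> U. hyp_form r v = 0}"
      by (rule ts_perp[OF hyp_qf _ CU ts]) (simp add: C_def supp_subsp)
  then show "{v \<in> perp (hyp_form r) C \<inter> U. hyp_form r v = 0} = C"
    using key by blast
  show "okq (hyp_form r) U" unfolding okq_def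
  proof (intro ballI impI)
    fix w assume wU: "w \<in> U" and w: "w \<noteq> 0 \<and> hyp_form r w = 0"
    show "\<exists>d\<in>U. bl (hyp_form r) w d \<noteq> 0"
    proof (rule ccontr)
      assume "\<not> ?thesis"
      then have al: "\<forall>d\<in>U. hb r w d = 0" by (simp add: hyp_bl)
      then have "w \<in> perp (hyp_form r) C" using CU by (auto simp: perp_def hyp_bl)
      then have wC: "w \<in> C" using key wU by blast
      have e: "w (2*k) = 0" if "k \<le> r" for k
      proof -
        have "ev (2*k+1) \<in> U" unfolding U_def vecs_supp by (rule ev_supp) (use that in auto)
        then show ?thesis using al hb_ev1[OF that, of w] by auto
      qed
      have "w i = 0" for i
        proof (cases "i \<in> K")
          case True then show ?thesis using e by (auto simp: K_def)
        next
          case False then show ?thesis using wC by (auto simp: C_def supp_def)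
        qed
      then have "w = 0" by (simp add: fun_eq_iff)
      then show False using w by simp
    qed
  qed
  show "card K = r + 1" unfolding K_def by (subst card_image) (auto simp: inj_on_def)
qed


lemma arith_h: "(q::real) > 0 \<Longrightarrow> q^(2*r+2)/q + q^(r+1) - q^(2*r+2)/(q*q^(r+1)) = q^(2*r+1) + q^(r+1) - q^r"
proof -
  assume q: "q > 0"
  have a: "q^(2*r+2)/q = q^(2*r+1)" using q by (simp add: power_Suc)
  have b: "q^(2*r+2)/(q*q^(r+1)) = q^r"
  proof -
    have "q^(2*r+2) = (q * q^(r+1)) * q^r" by (simp add: power_add[symmetric] mult_2)
    then show ?thesis using q by simp
  qed
  show ?thesis by (simp only: a b)
qed

lemma hyp_Zc: "real (Zc (hyp_form r) (vecs (2*r+1) :: (nat \<Rightarrow> 'a::{finite,field}) set))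
   = real (card (UNIV::'a set)) ^ (2*r+1) + real (card (UNIV::'a set)) ^ (r+1) - real (card (UNIV::'a set)) ^ r"
proof -
  note hf = hyp_facts[of r]
  have fK: "finite ((\<lambda>i. 2*i) ` {..r})" by simp
  have cU: "card (vecs (2*r+1) :: (nat \<Rightarrow> 'a) set) = card (UNIV::'a set) ^ (2*r+2)"
     "finite (vecs (2*r+1) :: (nat \<Rightarrow> 'a) set)"
    using card_supp[of "{..2*r+1}", where 'a='a] by (simp_all add: vecs_supp)
  have cC: "card (supp ((\<lambda>i. 2*i) ` {..r}) :: (nat \<Rightarrow> 'a) set) = card (UNIV::'a set) ^ (r+1)"
    using card_supp[OF fK, where 'a='a] hf(5) by simp
  have q: "real (card (UNIV::'a set)) > 0" using card_ge2[where 'a='a] by simp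
  have "real (Zc (hyp_form r) (vecs (2*r+1) :: (nat \<Rightarrow> 'a) set)) = real (card (vecs (2*r+1) :: (nat \<Rightarrow> 'a) set)) / real (card (UNIV::'a set)) + real (card (supp ((\<lambda>i. 2*i) ` {..r}) :: (nat \<Rightarrow> 'a) set))
     - real (card (vecs (2*r+1) :: (nat \<Rightarrow> 'a) set)) / (real (card (UNIV::'a set)) * real (card (supp ((\<lambda>i. 2*i) ` {..r}) :: (nat \<Rightarrow> 'a) set)))"
    by (rule Zc_from[OF hyp_qf hf(4) cU(2) _ _ hf(1,2,3)]) (simp_all add: vecs_supp supp_subsp)
  also have "\<dots> = real (card (UNIV::'a set)) ^ (2*r+1) + real (card (UNIV::'a set)) ^ (r+1) - real (card (UNIV::'a set)) ^ r"
    unfolding cU(1) cC of_nat_power using arith_h[OF q] .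
  finally show ?thesis .
qed

definition pb :: "nat \<Rightarrow> (nat \<Rightarrow> 'a::field) \<Rightarrow> (nat \<Rightarrow> 'a) \<Rightarrow> 'a" where
  "pb r x y = 2 * x 0 * y 0 + (\<Sum>i<r. x (2*i+1) * y (2*i+2) + y (2*i+1) * x (2*i+2))"

lemma par_add: "par_form r (x + y) = par_form r x + par_form r y + pb r x y"
  by (simp add: par_form_def pb_def sum.distrib[symmetric] algebra_simps power2_eq_square)

lemma par_bl: "bl (par_form r) = pb r"
  by (auto simp: fun_eq_iff bl_def par_add)

lemma par_qf: "qf (par_form r)"
  by (simp add: qf_def par_bl pb_def par_form_def sc_def sum_distrib_left sum.distrib[symmetric]
      algebra_simps power2_eq_square)

lemma pb_ev1: "k < r \<Longrightarrow> pb r v (ev (2*k+1)) = v (2*k+2)"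
  by (simp add: pb_def ev_def sum.delta)

lemma pb_ev2: "k < r \<Longrightarrow> pb r v (ev (2*k+2)) = v (2*k+1)"
  by (simp add: pb_def ev_def sum.delta)


lemma par_facts:
  fixes r :: nat
  defines "K \<equiv> (\<lambda>i. 2*i+1) ` {..<r}"
  defines "C \<equiv> (supp K :: (nat \<Rightarrow> 'a::{finite,field}) set)"
  defines "U \<equiv> (vecs (2*r) :: (nat \<Rightarrow> 'a) set)"
  shows "C \<subseteq> U" "\<forall>x\<in>C. par_form r x = 0" "{v \<in> perp (par_form r) C \<inter> U. par_form r v = 0} = C"
    "okq (par_form r) U" "card K = r"
proof -
  show CU: "C \<subseteq> U" unfolding C_def U_def vecs_supp K_def by (rule supp_mono) auto
  show ts: "\<forall>x\<in>C. par_form r x = 0"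
  proof
    fix x :: "nat \<Rightarrow> 'a" assume xC: "x \<in> C"
    have "\<forall>i. 2*i+2 \<notin> K" "0 \<notin> K" by (auto simp: K_def)
    then have "\<forall>i. x (2*i+2) = 0" "x 0 = 0" using xC by (auto simp: C_def supp_def)
    then show "par_form r x = 0" by (simp add: par_form_def)
  qed
  have key: "v \<in> C" if v: "v \<in> U" "v \<in> perp (par_form r) C" "par_form r v = 0" for v
  proof -
    have o: "v (2*k+2) = 0" if "k < r" for k
    proof -
      have "ev (2*k+1) \<in> C" unfolding C_def by (rule ev_supp) (use that in \<open>auto simp: K_def\<close>)
      then show ?thesis using v(2) pb_ev1[OF that, of v] by (auto simp: perp_def par_bl)
    qed
    have "par_form r v = v 0 ^ 2" using o by (simp add: par_form_def)
    then have v0: "v 0 = 0" using v(3) by simp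
    show "v \<in> C" unfolding C_def supp_def
    proof (intro CollectI allI impI)
      fix i assume i: "i \<notin> K"
      show "v i = 0"
      proof (cases "i \<le> 2*r")
        case False then show ?thesis using v(1) by (simp add: U_def vecs_def)
      next
        case True
        show ?thesis
        proof (cases "i = 0")
          case True then show ?thesis using v0 by simp
        next
          case False
          show ?thesis
          proof (cases "even i")
            case True then obtain m where m: "i = 2*m" by blast
            then have "m \<noteq> 0" using \<open>i \<noteq> 0\<close> by simp
            then obtain k where "m = Suc k" using not0_implies_Suc by blast
            then have "i = 2*k+2" using m by simp
            then show ?thesis using o[of k] \<open>i \<le> 2*r\<close> by auto
          next
            case False then obtain k where "i = 2*k+1" using oddE by blast
            then show ?thesis using i \<open>i \<le> 2*r\<close> by (auto simp: K_def)
          qed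
        qed
      qed
    qed
  qed
    have "C \<subseteq> {v \<in> perp (par_form r) C \<inter> U. par_form r v = 0}"
      by (rule ts_perp[OF par_qf _ CU ts]) (simp add: C_def supp_subsp)
  then show "{v \<in> perp (par_form r) C \<inter> U. par_form r v = 0} = C"
    using key by blast
  show "okq (par_form r) U" unfolding okq_def
  proof (intro ballI impI)
    fix w assume wU: "w \<in> U" and w: "w \<noteq> 0 \<and> par_form r w = 0"
    show "\<exists>d\<in>U. bl (par_form r) w d \<noteq> 0"
    proof (rule ccontr)
      assume "\<not> ?thesis"
      then have al: "\<forall>d\<in>U. pb r w d = 0" by (simp add: par_bl)
      then have "w \<in> perp (par_form r) C" using CU by (auto simp: perp_def par_bl)
      then have wC: "w \<in> C" using key wU w by blast
      have e: "w (2*k+1) = 0" if "k < r" for k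
      proof -
        have "ev (2*k+2) \<in> U" unfolding U_def vecs_supp by (rule ev_supp) (use that in auto)
        then show ?thesis using al pb_ev2[OF that, of w] by auto
      qed
      have "w i = 0" for i
        proof (cases "i \<in> K")
          case True then show ?thesis using e by (auto simp: K_def)
        next
          case False then show ?thesis using wC by (auto simp: C_def supp_def)
        qed
      then have "w = 0" by (simp add: fun_eq_iff)
      then show False using w by simp
    qed
  qed
  show "card K = r" unfolding K_def by (subst card_image) (auto simp: inj_on_def)
qed

lemma arith_p: "(q::real) > 0 \<Longrightarrow> q^(2*r+1)/q + q^r - q^(2*r+1)/(q*q^r) = q^(2*r)"
proof -
  assume q: "q > 0"
  have a: "q^(2*r+1)/q = q^(2*r)" using q by (simp add: power_Suc)
  have b: "q^(2*r+1)/(q*q^r) = q^r"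
  proof -
    have "q^(2*r+1) = (q * q^r) * q^r" by (simp add: power_add[symmetric] mult_2)
    then show ?thesis using q by simp
  qed
  show ?thesis by (simp only: a b)
qed

lemma par_Zc: "real (Zc (par_form r) (vecs (2*r) :: (nat \<Rightarrow> 'a::{finite,field}) set))
   = real (card (UNIV::'a set)) ^ (2*r)"
proof -
  note hf = par_facts[of r]
  have fK: "finite ((\<lambda>i. 2*i+1) ` {..<r})" by simp
  have cU: "card (vecs (2*r) :: (nat \<Rightarrow> 'a) set) = card (UNIV::'a set) ^ (2*r+1)"
     "finite (vecs (2*r) :: (nat \<Rightarrow> 'a) set)"
    using card_supp[of "{..2*r}", where 'a='a] by (simp_all add: vecs_supp)
  have cC: "card (supp ((\<lambda>i. 2*i+1) ` {..<r}) :: (nat \<Rightarrow> 'a) set) = card (UNIV::'a set) ^ r"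
    using card_supp[OF fK, where 'a='a] hf(5) by simp
  have q: "real (card (UNIV::'a set)) > 0" using card_ge2[where 'a='a] by simp
  have "real (Zc (par_form r) (vecs (2*r) :: (nat \<Rightarrow> 'a) set)) = real (card (vecs (2*r) :: (nat \<Rightarrow> 'a) set)) / real (card (UNIV::'a set)) + real (card (supp ((\<lambda>i. 2*i+1) ` {..<r}) :: (nat \<Rightarrow> 'a) set))
     - real (card (vecs (2*r) :: (nat \<Rightarrow> 'a) set)) / (real (card (UNIV::'a set)) * real (card (supp ((\<lambda>i. 2*i+1) ` {..<r}) :: (nat \<Rightarrow> 'a) set)))"
    by (rule Zc_from[OF par_qf hf(4) cU(2) _ _ hf(1,2,3)]) (simp_all add: vecs_supp supp_subsp)
  also have "\<dots> = real (card (UNIV::'a set)) ^ (2*r)"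
    unfolding cU(1) cC of_nat_power using arith_p[OF q] .
  finally show ?thesis .
qed



definition eb :: "nat \<Rightarrow> 'a \<Rightarrow> 'a \<Rightarrow> (nat \<Rightarrow> 'a::field) \<Rightarrow> (nat \<Rightarrow> 'a) \<Rightarrow> 'a" where
  "eb r d e x y = (\<Sum>i<r. x (2*i) * y (2*i+1) + y (2*i) * x (2*i+1))
     + (2 * x (2*r) * y (2*r) + d * (x (2*r) * y (2*r+1) + y (2*r) * x (2*r+1)) + 2 * e * x (2*r+1) * y (2*r+1))"

lemma ell_add: "ell_form r d e (x + y) = ell_form r d e x + ell_form r d e y + eb r d e x y"
  by (simp add: ell_form_def eb_def sum.distrib[symmetric] algebra_simps power2_eq_square)

lemma ell_bl: "bl (ell_form r d e) = eb r d e"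
  by (auto simp: fun_eq_iff bl_def ell_add)

lemma ell_qf: "qf (ell_form r d e)"
  by (simp add: qf_def ell_bl eb_def ell_form_def sc_def sum_distrib_left sum.distrib[symmetric]
      algebra_simps power2_eq_square)

lemma eb_ev0: "k < r \<Longrightarrow> eb r d e v (ev (2*k)) = v (2*k+1)"
  by (simp add: eb_def ev_def sum.delta)

lemma eb_ev1: "k < r \<Longrightarrow> eb r d e v (ev (2*k+1)) = v (2*k)"
  by (simp add: eb_def ev_def sum.delta)

lemma anis:
  fixes a b d e :: "'a::field"
  assumes irr: "\<forall>t. t^2 + d*t + e \<noteq> 0" and z: "a^2 + d*a*b + e*b^2 = 0"
  shows "a = 0 \<and> b = 0"
proof (cases "b = 0")
  case True then show ?thesis using z by simp
next
  case False
  have "(a/b)^2 + d*(a/b) + e = (a^2 + d*a*b + e*b^2) / b^2"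
    using False by (simp add: field_simps power2_eq_square)
  then have "(a/b)^2 + d*(a/b) + e = 0" using z by simp
  then show ?thesis using irr by blast
qed

lemma ell_facts:
  fixes r :: nat and d e :: "'a::{finite,field}"
  assumes irr: "\<forall>t::'a. t^2 + d*t + e \<noteq> 0"
  defines "K \<equiv> (\<lambda>i. 2*i) ` {..<r}"
  defines "C \<equiv> (supp K :: (nat \<Rightarrow> 'a) set)"
  defines "U \<equiv> (vecs (2*r+1) :: (nat \<Rightarrow> 'a) set)"
  shows "C \<subseteq> U" "\<forall>x\<in>C. ell_form r d e x = 0" "{v \<in> perp (ell_form r d e) C \<inter> U. ell_form r d e v = 0} = C"
    "okq (ell_form r d e) U" "card K = r"
proof -
  show CU: "C \<subseteq> U" unfolding C_def U_def vecs_supp K_def by (rule supp_mono) auto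
  show ts: "\<forall>x\<in>C. ell_form r d e x = 0"
  proof
    fix x :: "nat \<Rightarrow> 'a" assume xC: "x \<in> C"
    have "\<forall>i. 2*i+1 \<notin> K" "2*r \<notin> K" by (auto simp: K_def)
    then have "\<forall>i. x (2*i+1) = 0" "x (2*r) = 0" using xC by (auto simp: C_def supp_def)
    then show "ell_form r d e x = 0" by (simp add: ell_form_def)
  qed
  have key: "v \<in> C" if v: "v \<in> U" "v \<in> perp (ell_form r d e) C" "ell_form r d e v = 0" for v
  proof -
    have o: "v (2*k+1) = 0" if "k < r" for k
    proof -
      have "ev (2*k) \<in> C" unfolding C_def by (rule ev_supp) (use that in \<open>auto simp: K_def\<close>)
      then show ?thesis using v(2) eb_ev0[OF that, of d e v] by (auto simp: perp_def ell_bl)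
    qed
    have "ell_form r d e v = v (2*r) ^ 2 + d * v (2*r) * v (2*r+1) + e * v (2*r+1) ^ 2"
      using o by (simp add: ell_form_def)
    then have "v (2*r) ^ 2 + d * v (2*r) * v (2*r+1) + e * v (2*r+1) ^ 2 = 0" using v(3) by simp
    then have vr: "v (2*r) = 0" "v (2*r+1) = 0" using anis[OF irr] by blast+
    show "v \<in> C" unfolding C_def supp_def
    proof (intro CollectI allI impI)
      fix i assume i: "i \<notin> K"
      show "v i = 0"
      proof (cases "i < 2*r")
        case False
        then have "i = 2*r \<or> i = 2*r+1 \<or> i > 2*r+1" by auto
        then show ?thesis using v(1) vr by (auto simp: U_def vecs_def)
      next
        case True
        show ?thesis
        proof (cases "even i")
          case True then obtain k where "i = 2*k" by blast
          then show ?thesis using i \<open>i < 2*r\<close> by (auto simp: K_def)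
        next
          case False then obtain k where "i = 2*k+1" using oddE by blast
          then show ?thesis using o[of k] \<open>i < 2*r\<close> by auto
        qed
      qed
    qed
  qed
  have "C \<subseteq> {v \<in> perp (ell_form r d e) C \<inter> U. ell_form r d e v = 0}"
      by (rule ts_perp[OF ell_qf _ CU ts]) (simp add: C_def supp_subsp)
  then show "{v \<in> perp (ell_form r d e) C \<inter> U. ell_form r d e v = 0} = C"
    using key by blast
  show "okq (ell_form r d e) U" unfolding okq_def
  proof (intro ballI impI)
    fix w assume wU: "w \<in> U" and w: "w \<noteq> 0 \<and> ell_form r d e w = 0"
    show "\<exists>d'\<in>U. bl (ell_form r d e) w d' \<noteq> 0"
    proof (rule ccontr)
      assume "\<not> ?thesis"
      then have al: "\<forall>d'\<in>U. eb r d e w d' = 0" by (simp add: ell_bl)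
      then have "w \<in> perp (ell_form r d e) C" using CU by (auto simp: perp_def ell_bl)
      then have wC: "w \<in> C" using key wU w by blast
      have ee: "w (2*k) = 0" if "k < r" for k
      proof -
        have "ev (2*k+1) \<in> U" unfolding U_def vecs_supp by (rule ev_supp) (use that in auto)
        then show ?thesis using al eb_ev1[OF that, of d e w] by auto
      qed
      have "w i = 0" for i
        proof (cases "i \<in> K")
          case True then show ?thesis using ee by (auto simp: K_def)
        next
          case False then show ?thesis using wC by (auto simp: C_def supp_def)
        qed
      then have "w = 0" by (simp add: fun_eq_iff)
      then show False using w by simp
    qed
  qed
  show "card K = r" unfolding K_def by (subst card_image) (auto simp: inj_on_def)
qed

lemma arith_e: "(q::real) > 0 \<Longrightarrow> q^(2*r+2)/q + q^r - q^(2*r+2)/(q*q^r) = q^(2*r+1) + q^r - q^(r+1)"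
proof -
  assume q: "q > 0"
  have a: "q^(2*r+2)/q = q^(2*r+1)" using q by (simp add: power_Suc)
  have b: "q^(2*r+2)/(q*q^r) = q^(r+1)"
  proof -
    have "q^(2*r+2) = (q * q^r) * q^(r+1)" by (simp add: power_add[symmetric] mult_2)
    then show ?thesis using q by simp
  qed
  show ?thesis by (simp only: a b)
qed

lemma ell_Zc:
  assumes irr: "\<forall>t::'a. t^2 + d*t + e \<noteq> 0"
  shows "real (Zc (ell_form r d e) (vecs (2*r+1) :: (nat \<Rightarrow> 'a::{finite,field}) set))
   = real (card (UNIV::'a set)) ^ (2*r+1) + real (card (UNIV::'a set)) ^ r - real (card (UNIV::'a set)) ^ (r+1)"
proof -
  note hf = ell_facts[OF irr, of r]
  have fK: "finite ((\<lambda>i. 2*i) ` {..<r})" by simp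
  have cU: "card (vecs (2*r+1) :: (nat \<Rightarrow> 'a) set) = card (UNIV::'a set) ^ (2*r+2)"
     "finite (vecs (2*r+1) :: (nat \<Rightarrow> 'a) set)"
    using card_supp[of "{..2*r+1}", where 'a='a] by (simp_all add: vecs_supp)
  have cC: "card (supp ((\<lambda>i. 2*i) ` {..<r}) :: (nat \<Rightarrow> 'a) set) = card (UNIV::'a set) ^ r"
    using card_supp[OF fK, where 'a='a] hf(5) by simp
  have q: "real (card (UNIV::'a set)) > 0" using card_ge2[where 'a='a] by simp
  have "real (Zc (ell_form r d e) (vecs (2*r+1) :: (nat \<Rightarrow> 'a) set)) = real (card (vecs (2*r+1) :: (nat \<Rightarrow> 'a) set)) / real (card (UNIV::'a set)) + real (card (supp ((\<lambda>i. 2*i) ` {..<r}) :: (nat \<Rightarrow> 'a) set))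
     - real (card (vecs (2*r+1) :: (nat \<Rightarrow> 'a) set)) / (real (card (UNIV::'a set)) * real (card (supp ((\<lambda>i. 2*i) ` {..<r}) :: (nat \<Rightarrow> 'a) set)))"
    by (rule Zc_from[OF ell_qf hf(4) cU(2) _ _ hf(1,2,3)]) (simp_all add: vecs_supp supp_subsp)
  also have "\<dots> = real (card (UNIV::'a set)) ^ (2*r+1) + real (card (UNIV::'a set)) ^ r - real (card (UNIV::'a set)) ^ (r+1)"
    unfolding cU(1) cC of_nat_power using arith_e[OF q] .
  finally show ?thesis .
qed


lemma lin_add: "lin_map n M (x + y) = lin_map n M x + lin_map n M y"
  by (auto simp: lin_map_def fun_eq_iff algebra_simps sum.distrib)
lemma lin_sc: "lin_map n M (sc c x) = sc c (lin_map n M x)"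
  by (auto simp: lin_map_def fun_eq_iff sc_def sum_distrib_left algebra_simps)
lemma lin_0: "lin_map n M 0 = 0"
  by (auto simp: lin_map_def fun_eq_iff)

lemma comp_bl: "bl (\<lambda>v. F (lin_map n M v)) x y = bl F (lin_map n M x) (lin_map n M y)"
  by (simp add: bl_def lin_add)

lemma comp_qf: "qf F \<Longrightarrow> qf (\<lambda>v. F (lin_map n M v))"
  unfolding qf_def comp_bl by (simp add: lin_add lin_sc)

lemma comp_ok:
  assumes ok: "okq F (vecs n)" and b: "bij_betw (lin_map n M) (vecs n) (vecs n)"
  shows "okq (\<lambda>v. F (lin_map n M v)) (vecs n)"
  unfolding okq_def
proof (intro ballI impI)
  fix c assume cU: "c \<in> vecs n" and c: "c \<noteq> 0 \<and> F (lin_map n M c) = 0"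
  have "lin_map n M c \<noteq> 0"
  proof
    assume "lin_map n M c = 0"
    then have "lin_map n M c = lin_map n M 0" by (simp add: lin_0)
    moreover have "0 \<in> vecs n" by (simp add: vecs_def)
    ultimately have "c = 0" using b cU unfolding bij_betw_def inj_on_def by blast
    then show False using c by simp
  qed
  moreover have "lin_map n M c \<in> vecs n" using b cU by (auto simp: bij_betw_def)
  ultimately obtain d' where d': "d' \<in> vecs n" "bl F (lin_map n M c) d' \<noteq> 0"
    using ok c unfolding okq_def by blast
  obtain d where "d \<in> vecs n" "d' = lin_map n M d" using b d'(1) unfolding bij_betw_def by blast
  then show "\<exists>d\<in>vecs n. bl (\<lambda>v. F (lin_map n M v)) c d \<noteq> 0" using d' by (auto simp: comp_bl)
qed

lemma comp_Zc:
  assumes b: "bij_betw (lin_map n M) (vecs n) (vecs n)"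
  shows "Zc (\<lambda>v. F (lin_map n M v)) (vecs n) = Zc F (vecs n)"
proof -
  have "bij_betw (lin_map n M) {v \<in> vecs n. F (lin_map n M v) = 0} {w \<in> vecs n. F w = 0}"
    using b unfolding bij_betw_def inj_on_def by auto
  then show ?thesis unfolding Zc_def by (rule bij_betw_same_card)
qed

definition Dv :: "qtype \<Rightarrow> real \<Rightarrow> nat \<Rightarrow> real" where
  "Dv T q r = (case T of Elliptic \<Rightarrow> q^r - q^(r+1) | Hyperbolic \<Rightarrow> q^(r+1) - q^r | Parabolic \<Rightarrow> 0)"

lemma quad_data:
  assumes "is_quadric T n r (QS :: (nat \<Rightarrow> 'a::{finite,field}) set set)"
  shows "\<exists>Q. qf Q \<and> okq Q (vecs n) \<and> QS = zero_set n Q \<and>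
    real (Zc Q (vecs n)) = real (card (UNIV::'a set)) ^ n + Dv T (real (card (UNIV::'a set))) r \<and>
    n = (case T of Parabolic \<Rightarrow> 2*r | _ \<Rightarrow> 2*r+1)"
proof -
  obtain M where b: "bij_betw (lin_map n M) (vecs n) (vecs n)" and
    cs: "(case T of
        Elliptic \<Rightarrow> n = 2*r+1 \<and> (\<exists>d e. (\<forall>t::'a. t^2 + d*t + e \<noteq> 0) \<and>
                        QS = zero_set n (\<lambda>v. ell_form r d e (lin_map n M v)))
      | Hyperbolic \<Rightarrow> n = 2*r+1 \<and> QS = zero_set n (\<lambda>v. hyp_form r (lin_map n M v))
      | Parabolic \<Rightarrow> n = 2*r \<and> r \<ge> 1 \<and> QS = zero_set n (\<lambda>v. par_form r (lin_map n M v)))"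
    using assms unfolding is_quadric_def by blast
  let ?q = "real (card (UNIV::'a set))"
  show ?thesis
  proof (cases T)
    case Elliptic
    then obtain d e where n: "n = 2*r+1" and irr: "\<forall>t::'a. t^2 + d*t + e \<noteq> 0"
      and QS: "QS = zero_set n (\<lambda>v. ell_form r d e (lin_map n M v))" using cs by auto
    have ok: "okq (ell_form r d e) (vecs n)" using ell_facts(4)[OF irr, of r] n by simp
    have Z: "real (Zc (ell_form r d e) (vecs n)) = ?q ^ n + Dv T ?q r"
      using ell_Zc[OF irr, of r] n Elliptic by (simp add: Dv_def)
    show ?thesis
      apply (rule exI[of _ "\<lambda>v. ell_form r d e (lin_map n M v)"])
      using comp_qf[OF ell_qf] comp_ok[OF ok b] comp_Zc[OF b, of "ell_form r d e"] Z QS n Elliptic by auto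
  next
    case Hyperbolic
    then have n: "n = 2*r+1" and QS: "QS = zero_set n (\<lambda>v. hyp_form r (lin_map n M v))" using cs by auto
    have ok: "okq (hyp_form r) (vecs n :: (nat \<Rightarrow> 'a) set)" using hyp_facts(4)[of r] n by simp
    have Z: "real (Zc (hyp_form r) (vecs n :: (nat \<Rightarrow> 'a) set)) = ?q ^ n + Dv T ?q r"
      using hyp_Zc[of r, where 'a='a] n Hyperbolic by (simp add: Dv_def)
    show ?thesis
      apply (rule exI[of _ "\<lambda>v. hyp_form r (lin_map n M v)"])
      using comp_qf[OF hyp_qf] comp_ok[OF ok b] comp_Zc[OF b, of "hyp_form r"] Z QS n Hyperbolic by auto
  next
    case Parabolic
    then have n: "n = 2*r" and QS: "QS = zero_set n (\<lambda>v. par_form r (lin_map n M v))" using cs by auto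
    have ok: "okq (par_form r) (vecs n :: (nat \<Rightarrow> 'a) set)" using par_facts(4)[of r] n by simp
    have Z: "real (Zc (par_form r) (vecs n :: (nat \<Rightarrow> 'a) set)) = ?q ^ n + Dv T ?q r"
      using par_Zc[of r, where 'a='a] n Parabolic by (simp add: Dv_def)
    show ?thesis
      apply (rule exI[of _ "\<lambda>v. par_form r (lin_map n M v)"])
      using comp_qf[OF par_qf] comp_ok[OF ok b] comp_Zc[OF b, of "par_form r"] Z QS n Parabolic by auto
  qed
qed


lemma arithE: "(q::real) \<noteq> 0 \<Longrightarrow> q - 1 \<noteq> 0 \<Longrightarrow>
  (q*(u*w)*(u*w) + (u*w - q*(u*w)) - q*q*(u*w)*(u*w)/q + q*q*(u*w)*(u*w)/(q*(q*(q*u))) - (q*u + q - 1))/(q-1)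
  = (q*u - 1) + q*q*u*(w/q + 1)*(w/q^2 - 1)/(q-1)"
  by (simp add: field_simps power2_eq_square)

lemma arithH: "(q::real) \<noteq> 0 \<Longrightarrow> q - 1 \<noteq> 0 \<Longrightarrow>
  (q*(u*w)*(u*w) + (q*(u*w) - u*w) - q*q*(u*w)*(u*w)/q + q*q*(u*w)*(u*w)/(q*(q*(q*u))) - (q*u + q - 1))/(q-1)
  = (q*u - 1) + q*q*u*(w/q^2 + 1)*(w/q - 1)/(q-1)"
  by (simp add: field_simps power2_eq_square)

lemma arithP: "(q::real) \<noteq> 0 \<Longrightarrow> q - 1 \<noteq> 0 \<Longrightarrow>
  ((u*w)*(u*w) + 0 - q*(u*w)*(u*w)/q + q*(u*w)*(u*w)/(q*(q*(q*u))) - (q*u + q - 1))/(q-1)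
  = (q*u - 1) + q*q*u*(w/q^2 + 1)*(w/q^2 - 1)/(q-1)"
  by (simp add: field_simps power2_eq_square)


lemma final_arith:
  fixes q Y :: real
  assumes q: "q \<ge> 2"
    and eq: "(q - 1) * Y = q^n + Dv T q r - q^(n+1)/q + q^(n+1)/(q*(q*q^(s+1))) - (q^(s+1) + q - 1)"
    and n: "n = (case T of Parabolic \<Rightarrow> 2*r | _ \<Rightarrow> 2*r+1)"
  shows "Y = deg T q r s"
proof -
  have q0: "q \<noteq> 0" and q1: "q - 1 \<noteq> 0" using q by auto
  define u where "u = q powi (int s)"
  define w where "w = q powi (int r - int s)"
  have pr: "q^r = u * w"
  proof -
    have "q^r = q powi (int s + (int r - int s))" by simp
    also have "\<dots> = u * w" unfolding u_def w_def by (rule power_int_add) (simp add: q0)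
    finally show ?thesis .
  qed
  have ps1: "q^(s+1) = q * u" by (simp add: u_def)
  have ps2: "q^(s+2) = q * q * u" by (simp add: u_def)
  have wm1: "q powi (int r - int s - 1) = w / q" using q0
    by (simp add: w_def power_int_diff)
  have wm2: "q powi (int r - int s - 2) = w / q^2" using q0
    by (simp add: w_def power_int_diff)
  have Yeq: "Y = (q^n + Dv T q r - q^(n+1)/q + q^(n+1)/(q*(q*q^(s+1))) - (q^(s+1) + q - 1)) / (q - 1)"
    using eq q1 by (simp add: field_simps)
  have r1: "q^(r+1) = q * (u * w)" using pr by simp
  show ?thesis
  proof (cases T)
    case Elliptic
    then have nn: "n = 2*r+1" using n by simp
    have hn: "q^n = q*(u*w)*(u*w)" "q^(n+1) = q*q*(u*w)*(u*w)"
      unfolding nn pr[symmetric] by (simp_all add: power_add mult_2)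
    have hD: "Dv T q r = u*w - q*(u*w)" using Elliptic pr r1 by (simp add: Dv_def)
    have d: "deg T q r s = (q*u - 1) + q*q*u*(w/q + 1)*(w/q^2 - 1)/(q-1)"
      unfolding deg_def Let_def using Elliptic by (simp only: wm1 wm2 ps1 ps2 qtype.case prod.case)
    show ?thesis unfolding d Yeq hn hD ps1 by (rule arithE[OF q0 q1])
  next
    case Hyperbolic
    then have nn: "n = 2*r+1" using n by simp
    have hn: "q^n = q*(u*w)*(u*w)" "q^(n+1) = q*q*(u*w)*(u*w)"
      unfolding nn pr[symmetric] by (simp_all add: power_add mult_2)
    have hD: "Dv T q r = q*(u*w) - u*w" using Hyperbolic pr r1 by (simp add: Dv_def)
    have d: "deg T q r s = (q*u - 1) + q*q*u*(w/q^2 + 1)*(w/q - 1)/(q-1)"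
      unfolding deg_def Let_def using Hyperbolic by (simp only: wm1 wm2 ps1 ps2 qtype.case prod.case)
    show ?thesis unfolding d Yeq hn hD ps1 by (rule arithH[OF q0 q1])
  next
    case Parabolic
    then have nn: "n = 2*r" using n by simp
    have hn: "q^n = (u*w)*(u*w)" "q^(n+1) = q*(u*w)*(u*w)"
      unfolding nn pr[symmetric] by (simp_all add: power_add mult_2)
    have hD: "Dv T q r = 0" using Parabolic by (simp add: Dv_def)
    have d: "deg T q r s = (q*u - 1) + q*q*u*(w/q^2 + 1)*(w/q^2 - 1)/(q-1)"
      unfolding deg_def Let_def using Parabolic by (simp only: wm1 wm2 ps1 ps2 qtype.case prod.case)
    show ?thesis unfolding d Yeq hn hD ps1 by (rule arithP[OF q0 q1])
  qed
qed


lemma lam0[simp]: "(\<lambda>i. 0) = (0::nat \<Rightarrow> 'a::zero)" by (simp add: zero_fun_def)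

lemma pt_sc: "pt v = {sc c v | c. c \<noteq> 0}" by (simp add: pt_def sc_def)

lemma pt_self: "v \<in> pt v" unfolding pt_sc by (rule CollectI, rule exI[of _ 1]) simp

lemma pt_iff: "w \<in> pt v \<longleftrightarrow> (\<exists>c. c \<noteq> 0 \<and> w = sc c v)" unfolding pt_sc by blast

lemma pt_eq_imp: "pt v = pt w \<Longrightarrow> \<exists>c. c \<noteq> 0 \<and> v = sc c w"
proof -
  assume "pt v = pt w"
  then have "v \<in> pt w" using pt_self[of v] by simp
  then show ?thesis unfolding pt_iff .
qed

lemma pt_eq_I: "c \<noteq> 0 \<Longrightarrow> v = sc c w \<Longrightarrow> pt v = pt w"
proof -
  assume c: "c \<noteq> 0" and v: "v = sc c w"
  show "pt v = pt w"
  proof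
    show "pt v \<subseteq> pt w"
    proof
      fix x assume "x \<in> pt v"
      then obtain a where a: "a \<noteq> 0" "x = sc a v" unfolding pt_iff by blast
      then have "x = sc (a * c) w" using v by (simp add: sc_sc)
      then show "x \<in> pt w" unfolding pt_iff using a c by (intro exI[of _ "a*c"]) auto
    qed
    show "pt w \<subseteq> pt v"
    proof
      fix x assume "x \<in> pt w"
      then obtain a where a: "a \<noteq> 0" "x = sc a w" unfolding pt_iff by blast
      have "x = sc (a / c) v" using a c v by (simp add: sc_sc)
      then show "x \<in> pt v" unfolding pt_iff using a c by (intro exI[of _ "a/c"]) auto
    qed
  qed
qed

lemma pt_disj: "x \<in> pt v \<Longrightarrow> x \<in> pt w \<Longrightarrow> pt v = pt w"
proof -
  assume "x \<in> pt v" "x \<in> pt w"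
  then obtain a b where ab: "a \<noteq> 0" "x = sc a v" "b \<noteq> 0" "x = sc b w" unfolding pt_iff by blast
  then have "sc a v = sc a (sc (b / a) w)" by (simp add: sc_sc)
  then have "v = sc (b / a) w" using ab(1) sc_cancel by blast
  moreover have "b / a \<noteq> 0" using ab by simp
  ultimately show ?thesis by (rule pt_eq_I[rotated])
qed

lemma card_pt: "v \<noteq> 0 \<Longrightarrow> card (pt (v :: nat \<Rightarrow> 'a::{finite,field})) = card (UNIV::'a set) - 1"
proof -
  assume v: "v \<noteq> 0"
  have "pt v = (\<lambda>c. sc c v) ` (UNIV - {0})"
  proof (rule set_eqI)
    fix x show "x \<in> pt v \<longleftrightarrow> x \<in> (\<lambda>c. sc c v) ` (UNIV - {0})"
      unfolding pt_iff image_iff by blast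
  qed
  moreover have "inj_on (\<lambda>c. sc c v) (UNIV - {0})"
  proof (rule inj_onI)
    fix a b assume "sc a v = sc b v"
    then have "sc (a - b) v = 0" by (simp add: sc_def fun_eq_iff algebra_simps)
    then show "a = b" using v by (simp add: sc_eq0)
  qed
  ultimately show ?thesis by (simp add: card_image card_Diff_singleton)
qed

lemma vecs_subsp: "subsp (vecs n)" unfolding vecs_supp by (rule supp_subsp)

lemma zs_iff:
  assumes qf: "qf Q" and v: "v \<in> vecs n" "v \<noteq> 0"
  shows "pt v \<in> zero_set n Q \<longleftrightarrow> Q v = 0"
proof
  assume "pt v \<in> zero_set n Q"
  then have "\<exists>w. pt v = pt w \<and> Q w = 0" unfolding zero_set_def mem_Collect_eq by (elim exE conjE) (intro exI conjI, assumption+)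
  then obtain w where w: "pt v = pt w" "Q w = 0" by blast
  then obtain c where "v = sc c w" using pt_eq_imp by blast
  then show "Q v = 0" using w Q_sc[OF qf] by simp
next
  assume "Q v = 0"
  then show "pt v \<in> zero_set n Q" using v unfolding zero_set_def by (intro CollectI exI[of _ v]) simp
qed

lemma vspan_sub: "S \<subseteq> vspan S"
proof
  fix x assume "x \<in> S"
  then show "x \<in> vspan S" unfolding vspan_def
    by (intro CollectI exI[of _ "{x}"] exI[of _ "\<lambda>_. 1"]) auto
qed

lemma vspan_subsp: "subsp (vspan S)"
  unfolding subsp_def
proof (intro conjI ballI allI)
  show "0 \<in> vspan S" unfolding vspan_def
    by (intro CollectI exI[of _ "{}"] exI[of _ "\<lambda>_. 0"]) (auto simp: fun_eq_iff)
next
  fix x y assume "x \<in> vspan S" "y \<in> vspan S"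
  then obtain F1 c1 F2 c2 where F: "finite F1" "F1 \<subseteq> S" "x = (\<lambda>i. \<Sum>a\<in>F1. c1 a * a i)"
    "finite F2" "F2 \<subseteq> S" "y = (\<lambda>i. \<Sum>a\<in>F2. c2 a * a i)" unfolding vspan_def by blast
  define c where "c = (\<lambda>a. (if a \<in> F1 then c1 a else 0) + (if a \<in> F2 then c2 a else 0))"
  have "x + y = (\<lambda>i. \<Sum>a\<in>F1 \<union> F2. c a * a i)"
  proof (rule ext)
    fix i
    have "(\<Sum>a\<in>F1 \<union> F2. c a * a i) = (\<Sum>a\<in>F1 \<union> F2. (if a \<in> F1 then c1 a * a i else 0)
       + (if a \<in> F2 then c2 a * a i else 0))"
      by (rule sum.cong) (auto simp: c_def distrib_right)
    also have "\<dots> = (\<Sum>a\<in>F1 \<union> F2. (if a \<in> F1 then c1 a * a i else 0))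
       + (\<Sum>a\<in>F1 \<union> F2. (if a \<in> F2 then c2 a * a i else 0))"
      by (rule sum.distrib)
    also have "\<dots> = (\<Sum>a\<in>F1. c1 a * a i) + (\<Sum>a\<in>F2. c2 a * a i)"
    proof -
      have f: "finite (F1 \<union> F2)" using F by simp
      have "(\<Sum>a\<in>F1 \<union> F2. (if a \<in> F1 then c1 a * a i else 0)) = (\<Sum>a\<in>(F1 \<union> F2) \<inter> F1. c1 a * a i)"
        using sum.inter_restrict[OF f, of "\<lambda>a. c1 a * a i" F1] by simp
      moreover have "(\<Sum>a\<in>F1 \<union> F2. (if a \<in> F2 then c2 a * a i else 0)) = (\<Sum>a\<in>(F1 \<union> F2) \<inter> F2. c2 a * a i)"
        using sum.inter_restrict[OF f, of "\<lambda>a. c2 a * a i" F2] by simp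
      moreover have "(F1 \<union> F2) \<inter> F1 = F1" "(F1 \<union> F2) \<inter> F2 = F2" by auto
      ultimately show ?thesis by simp
    qed
    finally show "(x + y) i = (\<Sum>a\<in>F1 \<union> F2. c a * a i)" using F by simp
  qed
  then show "x + y \<in> vspan S" using F unfolding vspan_def by blast
next
  fix t x assume "x \<in> vspan S"
  then obtain F c where F: "finite F" "F \<subseteq> S" "x = (\<lambda>i. \<Sum>a\<in>F. c a * a i)" unfolding vspan_def by blast
  have "sc t x = (\<lambda>i. \<Sum>a\<in>F. (t * c a) * a i)" using F by (simp add: sc_def sum_distrib_left mult.assoc)
  then show "sc t x \<in> vspan S" unfolding vspan_def
    by (intro CollectI exI[of _ F] exI[of _ "\<lambda>a. t * c a"]) (use F in auto)
qed

lemma vspan_least: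
  assumes Wt: "subsp Wt" and S: "S \<subseteq> Wt"
  shows "vspan S \<subseteq> Wt"
proof
  fix x assume "x \<in> vspan S"
  then obtain F c where F: "finite F" "F \<subseteq> S" "x = (\<lambda>i. \<Sum>a\<in>F. c a * a i)" unfolding vspan_def by blast
  have "F \<subseteq> S \<Longrightarrow> (\<lambda>i. \<Sum>a\<in>F. c a * a i) \<in> Wt" using F(1)
  proof (induction F rule: finite_induct)
    case empty then show ?case using Wt by (simp add: subspD zero_fun_def[symmetric])
  next
    case (insert y F)
    have "(\<lambda>i. \<Sum>a\<in>insert y F. c a * a i) = sc (c y) y + (\<lambda>i. \<Sum>a\<in>F. c a * a i)"
      using insert by (simp add: sc_def fun_eq_iff)
    then show ?case using insert Wt S by (auto simp: subspD)
  qed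
  then show "x \<in> Wt" using F by simp
qed

definition sp2 :: "(nat \<Rightarrow> 'a::field) set \<Rightarrow> (nat \<Rightarrow> 'a) \<Rightarrow> (nat \<Rightarrow> 'a) set" where
  "sp2 A y = {a + sc t y | a t. a \<in> A}"

lemma sp2_subsp: "subsp A \<Longrightarrow> subsp (sp2 A y)"
  unfolding subsp_def sp2_def
proof (intro conjI ballI allI)
  assume A: "0 \<in> A \<and> (\<forall>x\<in>A. \<forall>y\<in>A. x + y \<in> A) \<and> (\<forall>c. \<forall>x\<in>A. sc c x \<in> A)"
  show "0 \<in> {a + sc t y |a t. a \<in> A}" using A by (intro CollectI exI[of _ 0] exI[of _ "0::'a"]) simp
  fix x z assume "x \<in> {a + sc t y |a t. a \<in> A}" "z \<in> {a + sc t y |a t. a \<in> A}"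
  then obtain a t a' t' where "a \<in> A" "a' \<in> A" "x = a + sc t y" "z = a' + sc t' y" by blast
  then show "x + z \<in> {a + sc t y |a t. a \<in> A}" using A
    by (intro CollectI exI[of _ "a + a'"] exI[of _ "t + t'"]) (auto simp: sc_add2)
next
  assume A: "0 \<in> A \<and> (\<forall>x\<in>A. \<forall>y\<in>A. x + y \<in> A) \<and> (\<forall>c. \<forall>x\<in>A. sc c x \<in> A)"
  fix c x assume "x \<in> {a + sc t y |a t. a \<in> A}"
  then obtain a t where "a \<in> A" "x = a + sc t y" by blast
  then show "sc c x \<in> {a + sc t y |a t. a \<in> A}" using A
    by (intro CollectI exI[of _ "sc c a"] exI[of _ "c * t"]) (auto simp: sc_add sc_sc)
qed

lemma vspan_sp2:
  assumes A: "subsp A" and S1: "S \<subseteq> sp2 A y" and S2: "A - {0} \<subseteq> S" and S3: "y \<in> S"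
  shows "vspan S = sp2 A y"
proof
  show "vspan S \<subseteq> sp2 A y" by (rule vspan_least[OF sp2_subsp[OF A] S1])
  show "sp2 A y \<subseteq> vspan S"
  proof
    fix v assume "v \<in> sp2 A y"
    then obtain a t where at: "a \<in> A" "v = a + sc t y" by (auto simp: sp2_def)
    have "a \<in> vspan S" using vspan_sub S2 at(1) subspD(1)[OF vspan_subsp] by (cases "a = 0") auto
    moreover have "y \<in> vspan S" using vspan_sub S3 by blast
    ultimately show "v \<in> vspan S" unfolding at(2) by (intro subspD(2)[OF vspan_subsp] subspD(3)[OF vspan_subsp])
  qed
qed

lemma sp2_ts:
  assumes qf: "qf Q" and A: "subsp A" and At: "\<forall>a\<in>A. Q a = 0"
  shows "(\<forall>v\<in>sp2 A y. Q v = 0) \<longleftrightarrow> Q y = 0 \<and> (\<forall>a\<in>A. bl Q a y = 0)"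
proof
  assume h: "\<forall>v\<in>sp2 A y. Q v = 0"
  have "0 + sc 1 y \<in> sp2 A y" using A unfolding sp2_def by (blast intro: subspD(1))
  then have y: "Q y = 0" using h by simp
  have "bl Q a y = 0" if a: "a \<in> A" for a
  proof -
    have "a + sc 1 y \<in> sp2 A y" unfolding sp2_def by (intro CollectI exI[of _ a] exI[of _ "1::'a"]) (use a in simp)
    then have "Q (a + y) = 0" using h by simp
    then show ?thesis using y At a by (simp add: Q_add[OF qf])
  qed
  then show "Q y = 0 \<and> (\<forall>a\<in>A. bl Q a y = 0)" using y by blast
next
  assume h: "Q y = 0 \<and> (\<forall>a\<in>A. bl Q a y = 0)"
  show "\<forall>v\<in>sp2 A y. Q v = 0"
  proof
    fix v assume "v \<in> sp2 A y"
    then obtain a t where "a \<in> A" "v = a + sc t y" by (auto simp: sp2_def)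
    then show "Q v = 0" using h At qf by (simp add: Q_add Q_sc bl_sc2)
  qed
qed


lemma lc_in:
  fixes k :: nat and b :: "nat \<Rightarrow> nat \<Rightarrow> 'a::field"
  assumes Wt: "subsp Wt" and b: "\<forall>j<k. b j \<in> Wt"
  shows "(\<lambda>i. \<Sum>j<k. c j * b j i) \<in> Wt"
  using b
proof (induction k)
  case 0 then show ?case using subspD(1)[OF Wt] by simp
next
  case (Suc k)
  have e: "(\<lambda>i. \<Sum>j<Suc k. c j * b j i) = (\<lambda>i. \<Sum>j<k. c j * b j i) + sc (c k) (b k)"
    by (simp add: fun_eq_iff sc_def)
  have "(\<lambda>i. \<Sum>j<k. c j * b j i) \<in> Wt" using Suc by simp
  moreover have "sc (c k) (b k) \<in> Wt" using Suc.prems subspD(3)[OF Wt] by simp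
  ultimately show ?case unfolding e by (rule subspD(2)[OF Wt])
qed

definition lcg :: "nat \<Rightarrow> (nat \<Rightarrow> nat \<Rightarrow> 'a::field) \<Rightarrow> (nat \<Rightarrow> 'a) \<Rightarrow> (nat \<Rightarrow> 'a)" where
  "lcg k b c = (\<lambda>i. \<Sum>j<k. c j * b j i)"

lemma vspan_lc:
  fixes k :: nat and b :: "nat \<Rightarrow> nat \<Rightarrow> 'a::field"
  shows "vspan (b ` {..<k}) = range (lcg k b)"
proof
  have sub: "subsp (range (lcg k b))"
    unfolding subsp_def
  proof (intro conjI ballI allI)
    have "0 = lcg k b (\<lambda>_. 0)" by (simp add: lcg_def)
    then show "0 \<in> range (lcg k b)" by (rule ssubst) (rule rangeI)
  next
    fix x y assume "x \<in> range (lcg k b)" "y \<in> range (lcg k b)"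
    then obtain c c' where "x = lcg k b c" "y = lcg k b c'" by blast
    then have "x + y = lcg k b (\<lambda>j. c j + c' j)" by (simp add: lcg_def fun_eq_iff distrib_right sum.distrib)
    then show "x + y \<in> range (lcg k b)" by (rule ssubst) (rule rangeI)
  next
    fix t x assume "x \<in> range (lcg k b)"
    then obtain c where "x = lcg k b c" by blast
    then have "sc t x = lcg k b (\<lambda>j. t * c j)" by (simp add: lcg_def fun_eq_iff sc_def sum_distrib_left mult.assoc)
    then show "sc t x \<in> range (lcg k b)" by (rule ssubst) (rule rangeI)
  qed
  have "b ` {..<k} \<subseteq> range (lcg k b)"
  proof
    fix v assume "v \<in> b ` {..<k}"
    then obtain l where l: "l < k" "v = b l" by blast
    have "v = lcg k b (\<lambda>j. if j = l then 1 else 0)"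
      using l by (simp add: lcg_def fun_eq_iff sum.delta)
    then show "v \<in> range (lcg k b)" by (rule ssubst) (rule rangeI)
  qed
  then show "vspan (b ` {..<k}) \<subseteq> range (lcg k b)"
    by (rule vspan_least[OF sub])
  show "range (lcg k b) \<subseteq> vspan (b ` {..<k})"
  proof
    fix v assume "v \<in> range (lcg k b)"
    then obtain c where c: "v = lcg k b c" by blast
    have "\<forall>j<k. b j \<in> vspan (b ` {..<k})" using vspan_sub[of "b ` {..<k}"] by blast
    then show "v \<in> vspan (b ` {..<k})" unfolding c lcg_def by (rule lc_in[OF vspan_subsp])
  qed
qed

lemma card_lc:
  assumes ind: "indep (b :: nat \<Rightarrow> nat \<Rightarrow> 'a::{finite,field}) k"
  shows "card (vspan (b ` {..<k})) = card (UNIV::'a set) ^ k"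
proof -
  have r: "range (lcg k b) = lcg k b ` (PiE {..<k} (\<lambda>_. UNIV))"
  proof
    show "range (lcg k b) \<subseteq> lcg k b ` (PiE {..<k} (\<lambda>_. UNIV))"
    proof
      fix v assume "v \<in> range (lcg k b)"
      then obtain c where c: "v = lcg k b c" by blast
      have "lcg k b c = lcg k b (restrict c {..<k})" by (simp add: lcg_def fun_eq_iff)
      moreover have "restrict c {..<k} \<in> PiE {..<k} (\<lambda>_. UNIV)" by simp
      ultimately show "v \<in> lcg k b ` (PiE {..<k} (\<lambda>_. UNIV))" using c by (metis image_eqI)
    qed
  qed auto
  have inj: "inj_on (lcg k b) (PiE {..<k} (\<lambda>_. UNIV))"
  proof (rule inj_onI)
    fix c c' assume c: "c \<in> PiE {..<k} (\<lambda>_. UNIV)" and c': "c' \<in> PiE {..<k} (\<lambda>_. UNIV)" and e: "lcg k b c = lcg k b c'"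
    have z: "(\<lambda>i. \<Sum>j<k. (c j - c' j) * b j i) = (\<lambda>i. 0)"
    proof (rule ext)
      fix i
      have "(\<Sum>j<k. c j * b j i) = (\<Sum>j<k. c' j * b j i)" using e by (simp add: lcg_def fun_eq_iff)
      then show "(\<Sum>j<k. (c j - c' j) * b j i) = 0" by (simp add: left_diff_distrib sum_subtractf)
    qed
    have "\<forall>j<k. c j - c' j = 0" using ind unfolding indep_def
      by (rule allE[of _ "\<lambda>j. c j - c' j"]) (rule mp, assumption, rule z)
    then have "\<forall>j<k. c j = c' j" by simp
    moreover have "\<forall>j. \<not> j < k \<longrightarrow> c j = c' j" using c c' by (auto simp: PiE_def extensional_def)
    ultimately show "c = c'" by (metis ext)
  qed
  have "card (vspan (b ` {..<k})) = card (lcg k b ` (PiE {..<k} (\<lambda>_. UNIV)))"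
    using vspan_lc[of b k] r by simp
  also have "\<dots> = card (PiE {..<k} (\<lambda>_. UNIV :: 'a set))" using inj by (rule card_image)
  also have "\<dots> = card (UNIV::'a set) ^ k" by (simp add: card_PiE)
  finally show ?thesis .
qed

lemma join_char:
  assumes qf: "qf Q" and V: "vspan (\<Union>S) = V" and Vn: "V \<subseteq> vecs n"
  shows "join S \<subseteq> zero_set n Q \<longleftrightarrow> (\<forall>v\<in>V. Q v = 0)"
proof
  assume h: "join S \<subseteq> zero_set n Q"
  show "\<forall>v\<in>V. Q v = 0"
  proof
    fix v assume v: "v \<in> V"
    show "Q v = 0"
    proof (cases "v = 0")
      case True then show ?thesis using qf by simp
    next
      case False
      have "pt v \<in> join S" unfolding join_def by (intro CollectI exI[of _ v]) (use v V False in simp)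
      then have "pt v \<in> zero_set n Q" using h by blast
      then show ?thesis using zs_iff[OF qf _ False] v Vn by blast
    qed
  qed
next
  assume h: "\<forall>v\<in>V. Q v = 0"
  show "join S \<subseteq> zero_set n Q"
  proof
    fix X assume "X \<in> join S"
    then have "\<exists>v. X = pt v \<and> v \<in> vspan (\<Union>S) \<and> v \<noteq> (\<lambda>i. 0)" unfolding join_def mem_Collect_eq .
    then obtain v where v: "X = pt v" "v \<in> V" "v \<noteq> 0" using V by auto
    then show "X \<in> zero_set n Q" using zs_iff[OF qf _ v(3)] h Vn by blast
  qed
qed

definition line :: "(nat \<Rightarrow> 'a::field) \<Rightarrow> (nat \<Rightarrow> 'a) set" where "line x = range (\<lambda>t. sc t x)"

lemma line_subsp: "subsp (line x)"
  unfolding subsp_def line_def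
proof (intro conjI ballI allI)
  show "0 \<in> range (\<lambda>t. sc t x)" by (rule image_eqI[of _ _ 0]) simp_all
  fix u v assume "u \<in> range (\<lambda>t. sc t x)" "v \<in> range (\<lambda>t. sc t x)"
  then obtain a b where "u = sc a x" "v = sc b x" by blast
  then have "u + v = sc (a + b) x" by (simp add: sc_add2)
  then show "u + v \<in> range (\<lambda>t. sc t x)" by (rule image_eqI) simp
next
  fix c u assume "u \<in> range (\<lambda>t. sc t x)"
  then obtain a where "u = sc a x" by blast
  then have "sc c u = sc (c * a) x" by (simp add: sc_sc)
  then show "sc c u \<in> range (\<lambda>t. sc t x)" by (rule image_eqI) simp
qed

lemma card_line: "x \<noteq> 0 \<Longrightarrow> card (line (x :: nat \<Rightarrow> 'a::{finite,field})) = card (UNIV::'a set)"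
proof -
  assume x: "x \<noteq> 0"
  have "inj (\<lambda>t. sc t x)"
  proof (rule injI)
    fix a b assume "sc a x = sc b x"
    then have "sc (a - b) x = 0" by (simp add: sc_def fun_eq_iff algebra_simps)
    then show "a = b" using x by (simp add: sc_eq0)
  qed
  then show ?thesis unfolding line_def by (simp add: card_image)
qed

lemma vecs_sc: "x \<in> vecs n \<Longrightarrow> sc c x \<in> vecs n" by (rule subspD(3)[OF vecs_subsp])


lemma sp2_vecs: "A \<subseteq> vecs n \<Longrightarrow> y \<in> vecs n \<Longrightarrow> sp2 A y \<subseteq> vecs n"
proof
  fix v assume A: "A \<subseteq> vecs n" and y: "y \<in> vecs n" and "v \<in> sp2 A y"
  then obtain a t where at: "a \<in> A" "v = a + sc t y" unfolding sp2_def by blast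
  then have "a \<in> vecs n" using A by blast
  then show "v \<in> vecs n" unfolding at(2) using y by (intro subspD(2)[OF vecs_subsp] subspD(3)[OF vecs_subsp])
qed

lemma line_vecs: "x \<in> vecs n \<Longrightarrow> line x \<subseteq> vecs n"
  unfolding line_def using vecs_sc by blast

lemma line_ts: "qf Q \<Longrightarrow> Q x = 0 \<Longrightarrow> \<forall>a\<in>line x. Q a = 0"
  unfolding line_def by (auto simp: Q_sc)

lemma line_bl: "qf Q \<Longrightarrow> (\<forall>a\<in>line x. bl Q a y = 0) \<longleftrightarrow> bl Q x y = 0"
proof
  assume qf: "qf Q" and h: "\<forall>a\<in>line x. bl Q a y = 0"
  have "x \<in> line x" unfolding line_def by (rule image_eqI[of _ _ 1]) simp_all
  then show "bl Q x y = 0" using h by blast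
next
  assume qf: "qf Q" and h: "bl Q x y = 0"
  show "\<forall>a\<in>line x. bl Q a y = 0"
  proof
    fix a assume "a \<in> line x"
    then obtain t where "a = sc t x" unfolding line_def by blast
    then show "bl Q a y = 0" using h bl_sc1[OF qf] by simp
  qed
qed

context
  fixes Q :: "(nat \<Rightarrow> 'a::{finite,field}) \<Rightarrow> 'a" and n :: nat and A :: "(nat \<Rightarrow> 'a) set"
    and alpha :: "(nat \<Rightarrow> 'a) set set"
  assumes qf: "qf Q" and A: "subsp A" and An: "A \<subseteq> vecs n" and At: "\<forall>a\<in>A. Q a = 0"
    and alpha: "alpha = {pt v | v. v \<in> A \<and> v \<noteq> (\<lambda>i. 0)}"
begin

lemma U_alpha: "\<Union>alpha = A - {0}"
proof
  show "\<Union>alpha \<subseteq> A - {0}"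
  proof
    fix z assume "z \<in> \<Union>alpha"
    then obtain X where X: "X \<in> alpha" "z \<in> X" by blast
    have "\<exists>v. X = pt v \<and> v \<in> A \<and> v \<noteq> (\<lambda>i. 0)" using X(1) unfolding alpha mem_Collect_eq .
    then obtain v where v: "X = pt v" "v \<in> A" "v \<noteq> 0" by auto
    have "z \<in> pt v" using X(2) v(1) by simp
    then obtain c where c: "c \<noteq> 0" "z = sc c v" unfolding pt_iff by blast
    have "z \<in> A" using c v A by (simp add: subspD)
    moreover have "z \<noteq> 0" using c v by (simp add: sc_eq0)
    ultimately show "z \<in> A - {0}" by simp
  qed
  show "A - {0} \<subseteq> \<Union>alpha"
  proof
    fix a assume a: "a \<in> A - {0}"
    have "pt a \<in> alpha" unfolding alpha by (intro CollectI exI[of _ a]) (use a in simp)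
    moreover have "a \<in> pt a" by (rule pt_self)
    ultimately show "a \<in> \<Union>alpha" by blast
  qed
qed

lemma pt_alpha: "y \<noteq> 0 \<Longrightarrow> pt y \<in> alpha \<longleftrightarrow> y \<in> A"
proof
  assume "pt y \<in> alpha"
  then have "\<exists>v. pt y = pt v \<and> v \<in> A \<and> v \<noteq> (\<lambda>i. 0)" unfolding alpha mem_Collect_eq .
  then obtain v where v: "pt y = pt v" "v \<in> A" by blast
  then obtain c where "y = sc c v" using pt_eq_imp by blast
  then show "y \<in> A" using v A by (simp add: subspD)
next
  assume "y \<noteq> 0" "y \<in> A"
  then show "pt y \<in> alpha" unfolding alpha by (intro CollectI exI[of _ y]) simp
qed

lemma t2: assumes y: "y \<in> vecs n" "y \<noteq> 0"
  shows "pt y \<in> type2 n (zero_set n Q) alpha \<longleftrightarrow> y \<notin> A \<and> Q y = 0 \<and> (\<forall>a\<in>A. bl Q a y = 0)"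
proof -
  have pts: "pt y \<in> points n" unfolding points_def by (intro CollectI exI[of _ y]) (use y in simp)
  have un: "\<Union>(insert (pt y) alpha) = pt y \<union> (A - {0})" using U_alpha by simp
  have vs: "vspan (\<Union>(insert (pt y) alpha)) = sp2 A y"
    unfolding un
  proof (rule vspan_sp2[OF A])
    show "pt y \<union> (A - {0}) \<subseteq> sp2 A y"
    proof
      fix z assume "z \<in> pt y \<union> (A - {0})"
      then show "z \<in> sp2 A y"
      proof
        assume "z \<in> pt y"
        then obtain c where "z = sc c y" unfolding pt_iff by blast
        then show "z \<in> sp2 A y" unfolding sp2_def
          by (intro CollectI exI[of _ 0] exI[of _ c]) (simp add: subspD(1)[OF A])
      next
        assume "z \<in> A - {0}"
        then show "z \<in> sp2 A y" unfolding sp2_def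
          by (intro CollectI exI[of _ z] exI[of _ "0::'a"]) simp
      qed
    qed
    show "A - {0} \<subseteq> pt y \<union> (A - {0})" by blast
    show "y \<in> pt y \<union> (A - {0})" using pt_self[of y] by blast
  qed
  have j: "join (insert (pt y) alpha) \<subseteq> zero_set n Q \<longleftrightarrow> (\<forall>v\<in>sp2 A y. Q v = 0)"
    by (rule join_char[OF qf vs sp2_vecs[OF An y(1)]])
  show ?thesis
    unfolding type2_def mem_Collect_eq j sp2_ts[OF qf A At] pt_alpha[OF y(2)] using pts by blast
qed

end

lemma adjc:
  fixes Q :: "(nat \<Rightarrow> 'a::{finite,field}) \<Rightarrow> 'a"
  assumes qf: "qf Q" and x: "x \<in> vecs n" "x \<noteq> 0" "Q x = 0" and y: "y \<in> vecs n" "y \<noteq> 0"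
  shows "adj (zero_set n Q) (pt x) (pt y) \<longleftrightarrow> Q y = 0 \<and> y \<notin> line x \<and> bl Q x y = 0"
proof -
  have ne: "pt x \<noteq> pt y \<longleftrightarrow> y \<notin> line x"
  proof
    assume h: "pt x \<noteq> pt y"
    show "y \<notin> line x"
    proof
      assume "y \<in> line x"
      then obtain t where t: "y = sc t x" unfolding line_def by blast
      then have "t \<noteq> 0" using y(2) by auto
      then have "pt y = pt x" using t by (rule pt_eq_I)
      then show False using h by simp
    qed
  next
    assume h: "y \<notin> line x"
    show "pt x \<noteq> pt y"
    proof
      assume "pt x = pt y"
      then obtain c where "y = sc c x" using pt_eq_imp[of y x] by metis
      then have "y \<in> line x" unfolding line_def by (rule image_eqI) simp
      then show False using h by simp
    qed
  qed
  have vs: "vspan (\<Union>{pt x, pt y}) = sp2 (line x) y"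
  proof (rule vspan_sp2[OF line_subsp])
    have z0: "0 \<in> line x" by (rule subspD(1)[OF line_subsp])
    show "\<Union>{pt x, pt y} \<subseteq> sp2 (line x) y"
    proof
      fix z assume "z \<in> \<Union>{pt x, pt y}"
      then have "z \<in> pt x \<or> z \<in> pt y" by simp
      then show "z \<in> sp2 (line x) y"
      proof
        assume "z \<in> pt x"
        then obtain c where "z = sc c x" unfolding pt_iff by blast
        moreover have "sc c x \<in> line x" unfolding line_def by simp
        ultimately show "z \<in> sp2 (line x) y" unfolding sp2_def
          by (intro CollectI exI[of _ "sc c x"] exI[of _ "0::'a"]) simp
      next
        assume "z \<in> pt y"
        then obtain c where "z = sc c y" unfolding pt_iff by blast
        then show "z \<in> sp2 (line x) y" unfolding sp2_def
          by (intro CollectI exI[of _ 0] exI[of _ c]) (simp add: z0)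
      qed
    qed
    show "line x - {0} \<subseteq> \<Union>{pt x, pt y}"
    proof
      fix z assume z: "z \<in> line x - {0}"
      then obtain t where t: "z = sc t x" unfolding line_def by blast
      then have "t \<noteq> 0" using z by auto
      then have "z \<in> pt x" using t unfolding pt_iff by blast
      then show "z \<in> \<Union>{pt x, pt y}" by simp
    qed
    show "y \<in> \<Union>{pt x, pt y}" using pt_self[of y] by simp
  qed
  have j: "join {pt x, pt y} \<subseteq> zero_set n Q \<longleftrightarrow> (\<forall>v\<in>sp2 (line x) y. Q v = 0)"
    by (rule join_char[OF qf vs sp2_vecs[OF line_vecs[OF x(1)] y(1)]])
  have ts: "(\<forall>v\<in>sp2 (line x) y. Q v = 0) \<longleftrightarrow> Q y = 0 \<and> bl Q x y = 0"
    using sp2_ts[OF qf line_subsp line_ts[OF qf x(3)]] line_bl[OF qf] by simp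
  have px: "pt x \<in> zero_set n Q" using zs_iff[OF qf x(1,2)] x(3) by simp
  have py: "pt y \<in> zero_set n Q \<longleftrightarrow> Q y = 0" by (rule zs_iff[OF qf y])
  show ?thesis unfolding adj_def j ts py ne using px by blast
qed


theorem lemma4p2:
  fixes QS alpha :: "(nat \<Rightarrow> 'a::{finite,field}) set set"
    and T :: qtype and n r s :: nat
  assumes "is_quadric T n r QS"
    and "int s < proj_index n QS"
    and "is_subspace n s alpha"
    and "alpha \<subseteq> QS"
  shows "\<forall>X \<in> type2 n QS alpha.
           real (card {Y \<in> type2 n QS alpha. adj QS X Y}) = deg T (real (card (UNIV :: 'a set))) r s"
proof
  fix X assume X: "X \<in> type2 n QS alpha"
  let ?q = "card (UNIV :: 'a set)"
  have q2: "?q \<ge> 2" by (rule card_ge2)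
  obtain Q where Qall: "qf Q \<and> okq Q (vecs n) \<and> QS = zero_set n Q \<and>
    real (Zc Q (vecs n)) = real ?q ^ n + Dv T (real ?q) r \<and>
    n = (case T of Parabolic \<Rightarrow> 2*r | _ \<Rightarrow> 2*r+1)"
    using quad_data[OF assms(1)] by (rule exE)
  have qf: "qf Q" and ok: "okq Q (vecs n)" and QS: "QS = zero_set n Q"
    and ZU: "real (Zc Q (vecs n)) = real ?q ^ n + Dv T (real ?q) r"
    and nT: "n = (case T of Parabolic \<Rightarrow> 2*r | _ \<Rightarrow> 2*r+1)" using Qall by blast+
  obtain b where ball: "(\<forall>j<s+1. b j \<in> vecs n) \<and> indep b (s+1) \<and>
      alpha = {pt v | v. v \<in> vspan (b ` {..<s+1}) \<and> v \<noteq> (\<lambda>i. 0)}"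
    using assms(3) unfolding is_subspace_def by (rule exE)
  define A where "A = vspan (b ` {..<s+1})"
  have bn: "\<forall>j<s+1. b j \<in> vecs n" and ind: "indep b (s+1)"
    and alpha: "alpha = {pt v | v. v \<in> A \<and> v \<noteq> (\<lambda>i. 0)}" using ball by (simp_all add: A_def)
  have Asub: "subsp A" unfolding A_def by (rule vspan_subsp)
  have An: "A \<subseteq> vecs n" unfolding A_def by (rule vspan_least[OF vecs_subsp]) (use bn in auto)
  have cA: "card A = ?q ^ (s+1)" unfolding A_def by (rule card_lc[OF ind])
  have fU: "finite (vecs n :: (nat \<Rightarrow> 'a) set)" using card_supp(2)[of "{..n}"] by (simp add: vecs_supp)
  have cU: "card (vecs n :: (nat \<Rightarrow> 'a) set) = ?q ^ (n+1)"
    using card_supp(1)[of "{..n}"] by (simp add: vecs_supp)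
  have At: "\<forall>a\<in>A. Q a = 0"
  proof
    fix a assume a: "a \<in> A"
    show "Q a = 0"
    proof (cases "a = 0")
      case True then show ?thesis using qf by simp
    next
      case False
      have "pt a \<in> alpha" unfolding alpha by (intro CollectI exI[of _ a]) (use a False in simp)
      then have "pt a \<in> zero_set n Q" using assms(4) QS by blast
      then show ?thesis using zs_iff[OF qf _ False] a An by blast
    qed
  qed
  note t2 = t2[OF qf Asub An At alpha]
  have "X \<in> points n" using X by (simp add: type2_def)
  then have "\<exists>v. X = pt v \<and> v \<in> vecs n \<and> v \<noteq> (\<lambda>i. 0)" unfolding points_def mem_Collect_eq .
  then obtain x where Xx: "X = pt x" and xn: "x \<in> vecs n" and x0: "x \<noteq> 0" by auto
  have xc: "x \<notin> A \<and> Q x = 0 \<and> (\<forall>a\<in>A. bl Q a x = 0)" using t2[OF xn x0] X Xx QS by simp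
  then have xA: "x \<notin> A" and Qx: "Q x = 0" and xperp: "\<forall>a\<in>A. bl Q a x = 0" by simp_all
  define C where "C = sp2 A x"
  have Csub: "subsp C" unfolding C_def by (rule sp2_subsp[OF Asub])
  have Cn: "C \<subseteq> vecs n" unfolding C_def by (rule sp2_vecs[OF An xn])
  have Cts: "\<forall>v\<in>C. Q v = 0" unfolding C_def using sp2_ts[OF qf Asub At, of x] Qx xperp by simp
  define V where "V = {y \<in> vecs n. y \<notin> A \<and> Q y = 0 \<and> (\<forall>a\<in>A. bl Q a y = 0) \<and> y \<notin> line x \<and> bl Q x y = 0}"
  define P where "P = {v \<in> perp Q C \<inter> vecs n. Q v = 0}"
  have A0: "0 \<in> A" by (rule subspD(1)[OF Asub])
  have Yset: "{Y \<in> type2 n QS alpha. adj QS X Y} = pt ` V"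
  proof
    show "{Y \<in> type2 n QS alpha. adj QS X Y} \<subseteq> pt ` V"
    proof
      fix Y assume Y: "Y \<in> {Y \<in> type2 n QS alpha. adj QS X Y}"
      then have "Y \<in> points n" by (simp add: type2_def)
      then have "\<exists>v. Y = pt v \<and> v \<in> vecs n \<and> v \<noteq> (\<lambda>i. 0)" unfolding points_def mem_Collect_eq .
      then obtain y where Yy: "Y = pt y" and yn: "y \<in> vecs n" and y0: "y \<noteq> 0" by auto
      have c1: "y \<notin> A \<and> Q y = 0 \<and> (\<forall>a\<in>A. bl Q a y = 0)" using t2[OF yn y0] Y Yy QS by simp
      have c2: "Q y = 0 \<and> y \<notin> line x \<and> bl Q x y = 0"
        using adjc[OF qf xn x0 Qx yn y0] Y Yy Xx QS by simp
      have "y \<in> V" unfolding V_def using yn c1 c2 by simp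
      then show "Y \<in> pt ` V" using Yy by simp
    qed
    show "pt ` V \<subseteq> {Y \<in> type2 n QS alpha. adj QS X Y}"
    proof
      fix Y assume "Y \<in> pt ` V"
      then obtain y where Yy: "Y = pt y" and yV: "y \<in> V" by blast
      have yn: "y \<in> vecs n" using yV by (simp add: V_def)
      have y0: "y \<noteq> 0" using yV A0 by (auto simp: V_def)
      have "pt y \<in> type2 n QS alpha" using t2[OF yn y0] yV QS by (simp add: V_def)
      moreover have "adj QS X (pt y)" using adjc[OF qf xn x0 Qx yn y0] yV QS Xx by (simp add: V_def)
      ultimately show "Y \<in> {Y \<in> type2 n QS alpha. adj QS X Y}" using Yy by simp
    qed
  qed
  have Vsc: "sc c y \<in> V" if yV: "y \<in> V" and c: "c \<noteq> 0" for y c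
  proof -
    have yn: "y \<in> vecs n" and yA: "y \<notin> A" and Qy: "Q y = 0" and ya: "\<forall>a\<in>A. bl Q a y = 0"
      and yl: "y \<notin> line x" and xy: "bl Q x y = 0" using yV by (simp_all add: V_def)
    have bk: "sc (inverse c) (sc c y) = y" by (rule sc_inv[OF c])
    have "sc c y \<notin> A"
    proof
      assume "sc c y \<in> A"
      then have "sc (inverse c) (sc c y) \<in> A" using Asub by (simp add: subspD)
      then show False using bk yA by simp
    qed
    moreover have "sc c y \<notin> line x"
    proof
      assume "sc c y \<in> line x"
      then obtain t where "sc c y = sc t x" unfolding line_def by blast
      then have "y = sc (inverse c * t) x" using bk by (metis sc_sc)
      then have "y \<in> line x" unfolding line_def by (rule image_eqI) simp
      then show False using yl by simp
    qed
    moreover have "sc c y \<in> vecs n" using yn by (rule vecs_sc)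
    moreover have "Q (sc c y) = 0" using Qy by (simp add: Q_sc[OF qf])
    moreover have "\<forall>a\<in>A. bl Q a (sc c y) = 0" using ya by (simp add: bl_sc2[OF qf])
    moreover have "bl Q x (sc c y) = 0" using xy by (simp add: bl_sc2[OF qf])
    ultimately show ?thesis unfolding V_def by simp
  qed
  have fV: "finite V" using fU by (rule finite_subset[rotated]) (auto simp: V_def)
  have V0: "0 \<notin> V" using A0 by (simp add: V_def)
  have UV: "\<Union>(pt ` V) = V"
  proof
    show "\<Union>(pt ` V) \<subseteq> V"
    proof
      fix z assume "z \<in> \<Union>(pt ` V)"
      then obtain y where y: "y \<in> V" "z \<in> pt y" by blast
      then obtain c where "c \<noteq> 0" "z = sc c y" unfolding pt_iff by blast
      then show "z \<in> V" using Vsc[OF y(1)] by simp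
    qed
    show "V \<subseteq> \<Union>(pt ` V)"
    proof
      fix y assume "y \<in> V"
      then show "y \<in> \<Union>(pt ` V)" using pt_self[of y] by blast
    qed
  qed
  have cardV: "(?q - 1) * card (pt ` V) = card V"
  proof -
    have "(?q - 1) * card (pt ` V) = card (\<Union>(pt ` V))"
    proof (rule card_partition)
      show "finite (pt ` V)" using fV by simp
      show "finite (\<Union>(pt ` V))" using fV UV by simp
      show "card c = ?q - 1" if cV: "c \<in> pt ` V" for c
      proof -
        obtain y where y: "y \<in> V" "c = pt y" using cV by blast
        have "y \<noteq> 0" using V0 y(1) by auto
        then show "card c = ?q - 1" using card_pt y(2) by simp
      qed
      show "c1 \<inter> c2 = {}" if hh: "c1 \<in> pt ` V" "c2 \<in> pt ` V" "c1 \<noteq> c2" for c1 c2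
      proof (rule ccontr)
        assume "c1 \<inter> c2 \<noteq> {}"
        then obtain z where z: "z \<in> c1" "z \<in> c2" by blast
        obtain y1 y2 where yy: "c1 = pt y1" "c2 = pt y2" using hh(1,2) by blast
        then have "c1 = c2" using pt_disj[of z y1 y2] z by simp
        then show False using hh(3) by simp
      qed
    qed
    then show ?thesis using UV by simp
  qed
  have perpC: "y \<in> perp Q C \<longleftrightarrow> (\<forall>a\<in>A. bl Q a y = 0) \<and> bl Q x y = 0" for y
  proof
    assume h: "y \<in> perp Q C"
    have "\<forall>a\<in>A. bl Q a y = 0"
    proof
      fix a assume a: "a \<in> A"
      have "a + sc 0 x \<in> C" unfolding C_def sp2_def by (intro CollectI exI[of _ a] exI[of _ "0::'a"]) (use a in simp)
      then have "bl Q y a = 0" using h by (simp add: perp_def)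
      then show "bl Q a y = 0" by (simp add: bl_sym[OF qf, of a y])
    qed
    moreover have "bl Q x y = 0"
    proof -
      have "0 + sc 1 x \<in> C" unfolding C_def sp2_def by (intro CollectI exI[of _ 0] exI[of _ "1::'a"]) (use A0 in simp)
      then have "bl Q y x = 0" using h by (simp add: perp_def)
      then show ?thesis by (simp add: bl_sym[OF qf, of x y])
    qed
    ultimately show "(\<forall>a\<in>A. bl Q a y = 0) \<and> bl Q x y = 0" by simp
  next
    assume h: "(\<forall>a\<in>A. bl Q a y = 0) \<and> bl Q x y = 0"
    show "y \<in> perp Q C" unfolding perp_def
    proof (intro CollectI ballI)
      fix v assume "v \<in> C"
      then obtain a t where at: "a \<in> A" "v = a + sc t x" unfolding C_def sp2_def by blast
      have "bl Q y a = 0" using h at(1) by (simp add: bl_sym[OF qf, of y a])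
      moreover have "bl Q y x = 0" using h by (simp add: bl_sym[OF qf, of y x])
      ultimately show "bl Q y v = 0" unfolding at(2) by (simp add: bl_add2[OF qf] bl_sc2[OF qf])
    qed
  qed
  have AL: "A \<union> line x \<subseteq> P"
  proof -
    have "C \<subseteq> P" unfolding P_def by (rule ts_perp[OF qf Csub Cn Cts])
    moreover have "A \<subseteq> C"
    proof
      fix a assume "a \<in> A"
      then show "a \<in> C" unfolding C_def sp2_def by (intro CollectI exI[of _ a] exI[of _ "0::'a"]) simp
    qed
    moreover have "line x \<subseteq> C"
    proof
      fix z assume "z \<in> line x"
      then obtain t where "z = sc t x" unfolding line_def by blast
      then show "z \<in> C" unfolding C_def sp2_def by (intro CollectI exI[of _ 0] exI[of _ t]) (simp add: A0)
    qed
    ultimately show ?thesis by blast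
  qed
  have PV: "P = V \<union> (A \<union> line x)"
  proof
    show "P \<subseteq> V \<union> (A \<union> line x)"
    proof
      fix y assume "y \<in> P"
      then have "y \<in> vecs n" "Q y = 0" "(\<forall>a\<in>A. bl Q a y = 0) \<and> bl Q x y = 0"
        using perpC by (auto simp: P_def)
      then show "y \<in> V \<union> (A \<union> line x)" by (auto simp: V_def)
    qed
    show "V \<union> (A \<union> line x) \<subseteq> P"
    proof
      fix y assume "y \<in> V \<union> (A \<union> line x)"
      then show "y \<in> P"
      proof
        assume "y \<in> V"
        then show "y \<in> P" using perpC by (auto simp: V_def P_def)
      qed (use AL in blast)
    qed
  qed
  have fA: "finite A" using fU An by (rule finite_subset[rotated])
  have fL: "finite (line x)" using fU line_vecs[OF xn] by (rule finite_subset[rotated])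
  have disj: "V \<inter> (A \<union> line x) = {}" by (auto simp: V_def)
  have cP: "card P = card V + card (A \<union> line x)"
    unfolding PV using fV fA fL disj by (simp add: card_Un_disjoint)
  have AiL: "A \<inter> line x = {0}"
  proof
    show "A \<inter> line x \<subseteq> {0}"
    proof
      fix z assume z: "z \<in> A \<inter> line x"
      then obtain t where t: "z = sc t x" unfolding line_def by blast
      show "z \<in> {0}"
      proof (cases "t = 0")
        case True then show ?thesis using t by simp
      next
        case False
        have "sc (inverse t) z \<in> A" using z Asub by (simp add: subspD)
        then have "x \<in> A" using t sc_inv[OF False] by simp
        then show ?thesis using xA by simp
      qed
    qed
    show "{0} \<subseteq> A \<inter> line x" using A0 subspD(1)[OF line_subsp] by simp
  qed
  have cAL: "card (A \<union> line x) + 1 = card A + ?q"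
    using card_Un_Int[OF fA fL] AiL card_line[OF x0] by simp
  have cC: "card C = ?q * card A"
  proof -
    have inj: "inj_on (\<lambda>(a,t). a + sc t x) (A \<times> UNIV)"
    proof (rule inj_onI)
      fix u v assume u: "u \<in> A \<times> UNIV" and v: "v \<in> A \<times> UNIV" and e: "(\<lambda>(a,t). a + sc t x) u = (\<lambda>(a,t). a + sc t x) v"
      obtain a t where at: "u = (a,t)" "a \<in> A" using u by auto
      obtain a' t' where at': "v = (a',t')" "a' \<in> A" using v by auto
      have e': "a + sc t x = a' + sc t' x" using e at at' by simp
      have tt: "t = t'"
      proof (rule ccontr)
        assume ne: "t \<noteq> t'"
        have "sc (t - t') x = a' - a" using e' by (simp add: sc_def fun_eq_iff algebra_simps)
        then have "sc (t - t') x \<in> A" using at(2) at'(2) Asub by (simp add: subspD)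
        then have "sc (inverse (t - t')) (sc (t - t') x) \<in> A" using Asub by (simp add: subspD)
        then have "x \<in> A" using sc_inv[of "t - t'" x] ne by simp
        then show False using xA by simp
      qed
      then have "a = a'" using e' by simp
      then show "u = v" using at at' tt by simp
    qed
    have img: "(\<lambda>(a,t). a + sc t x) ` (A \<times> UNIV) = C" unfolding C_def sp2_def by auto
    have "card C = card (A \<times> (UNIV :: 'a set))" using card_image[OF inj] img by simp
    then show ?thesis by (simp add: card_cartesian_product)
  qed
  have MC: "real (Zc Q (perp Q C \<inter> vecs n)) = real (Zc Q (vecs n)) - real (card (vecs n :: (nat \<Rightarrow> 'a) set)) / real ?q
       + real (card (vecs n :: (nat \<Rightarrow> 'a) set)) / (real ?q * real (card C))"
    by (rule main_count[OF qf fU vecs_subsp ok Csub Cn Cts])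
  have ZP: "Zc Q (perp Q C \<inter> vecs n) = card P" by (simp add: Zc_def P_def)
  define Yc where "Yc = real (card {Y \<in> type2 n QS alpha. adj QS X Y})"
  have rq: "real (?q - 1) = real ?q - 1" using q2 by (simp add: of_nat_diff)
  have e1: "(real ?q - 1) * Yc = real (card V)"
    unfolding Yc_def Yset using arg_cong[OF cardV, of real] rq by simp
  have e2: "real (card P) = real (card V) + real (card A) + real ?q - 1"
    using cP cAL by (simp add: algebra_simps)
  have fin: "(real ?q - 1) * Yc = real ?q ^ n + Dv T (real ?q) r - real ?q ^ (n+1) / real ?q
      + real ?q ^ (n+1) / (real ?q * (real ?q * real ?q ^ (s+1))) - (real ?q ^ (s+1) + real ?q - 1)"
    using e1 e2 MC ZP ZU cU cC cA by (simp add: algebra_simps)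
  have "Yc = deg T (real ?q) r s"
    by (rule final_arith[OF _ fin nT]) (use q2 in simp)
  then show "real (card {Y \<in> type2 n QS alpha. adj QS X Y}) = deg T (real ?q) r s"
    by (simp add: Yc_def)
qed


end
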